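(* Let $G$ be a connected graph and let $u,v\in V(G)$. (a) Suppose $u$ and $v$ are adjacent in $G$ and let $T,T'$ be search trees on $G$. Then $u$ and $v$ have different relative order in $T$ and $T'$ if and only if every sequence of rotations transforming $T$ into $T'$ contains an odd number of $uv$-rotations. (b) If $u$ and $v$ are true twins in $G$ and $T,T'$ are search trees on $G$, then every minimum length $TT'$-path in $\mathcal{R}(G)$ has exactly one edge determined by a $uv$-rotation if $u$ and $v$ have different relative orders in $T$ and $T'$, and no edge determined by a $uv$-rotation if $u$ and $v$ have the same relative order in $T$ and $T'$.
   Context: For a connected graph $G$, a search tree on $G$ is a rooted tree with vertex set $V(G)$ defined recursively: its root is some vertex $r\in V(G)$, and the children of $r$ are the roots of search trees on the connected components of $G-r$. For a rooted tree $T$ and $w\in V(T)$, $T|w$ denotes the subtree rooted at $w$. Let $T$ be a search tree on $G$, let $b$ be a child of $a$ in $T$, and let $p$ be the parent of $a$ (if it exists). The $ab$-rotation (also called a rotation of the pair $a,b$) transforms $T$ into the search tree $T'$ in which: $a$ is a child of $b$ and $b$ is a child of $p$ (or $b$ is the root if $a$ was the root); every subtree of $a$ in $T$ other than $T|b$ is a subtree of $a$ in $T'$; and every subtree $S$ of $b$ in $T$ is a subtree of $a$ in $T'$ if $a$ is adjacent in $G$ to some vertex of $S$, and a subtree of $b$ in $T'$ otherwise. The rotation graph $\mathcal{R}(G)$ has the search trees on $G$ as vertices, two adjacent iff they differ by one rotation. If $u$ is an ancestor of $v$ in $T$ and a descendant of $v$ in $T'$ (or vice versa), $u,v$ have different relative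 order in $T$ and $T'$; if $u$ is an ancestor of $v$ in both, or a descendant of $v$ in both, they have the same relative order. True twins: vertices with equal closed neighbourhoods. *)

theory Defs
  imports Main
begin

definition simple_graph :: "'a set \<Rightarrow> ('a \<Rightarrow> 'a \<Rightarrow> bool) \<Rightarrow> bool" where
  "simple_graph V E \<longleftrightarrow> finite V \<and>
     (\<forall>x y. E x y \<longrightarrow> x \<in> V \<and> y \<in> V \<and> x \<noteq> y \<and> E y x)"

definition reach_in :: "('a \<Rightarrow> 'a \<Rightarrow> bool) \<Rightarrow> 'a set \<Rightarrow> 'a \<Rightarrow> 'a \<Rightarrow> bool" where
  "reach_in E S x y \<longleftrightarrow> x \<in> S \<and> (x, y) \<in> {(a, b). a \<in> S \<and> b \<in> S \<and> E a b}\<^sup>*"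

definition connected_on :: "('a \<Rightarrow> 'a \<Rightarrow> bool) \<Rightarrow> 'a set \<Rightarrow> bool" where
  "connected_on E S \<longleftrightarrow> S \<noteq> {} \<and> (\<forall>x\<in>S. \<forall>y\<in>S. reach_in E S x y)"

definition components :: "('a \<Rightarrow> 'a \<Rightarrow> bool) \<Rightarrow> 'a set \<Rightarrow> 'a set set" where
  "components E S = {{y. reach_in E S x y} | x. x \<in> S}"

text \<open>A rooted tree is represented by its parent map: p x = Some y iff y is the
  parent of x; the root and all vertices outside the tree are mapped to None.\<close>

definition anc :: "('a \<Rightarrow> 'a option) \<Rightarrow> 'a \<Rightarrow> 'a \<Rightarrow> bool" where
  "anc p u v \<longleftrightarrow> (v, u) \<in> {(x, y). p x = Some y}\<^sup>+"  \<comment> \<open>u is a proper ancestor of v\<close>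

definition in_subtree :: "('a \<Rightarrow> 'a option) \<Rightarrow> 'a \<Rightarrow> 'a \<Rightarrow> bool" where
  "in_subtree p w y \<longleftrightarrow> y = w \<or> anc p w y"

inductive stree :: "('a \<Rightarrow> 'a \<Rightarrow> bool) \<Rightarrow> 'a set \<Rightarrow> ('a \<Rightarrow> 'a option) \<Rightarrow> bool" for E where
  "\<lbrakk> r \<in> S; connected_on E S; p r = None; \<forall>x. x \<notin> S \<longrightarrow> p x = None;
     \<forall>C \<in> components E (S - {r}). \<exists>c \<in> C. p c = Some r \<and>
         stree E C (\<lambda>x. if x \<in> C \<and> x \<noteq> c then p x else None) \<rbrakk>
   \<Longrightarrow> stree E S p"

text \<open>The ab-rotation (b a child of a).\<close>
definition rot :: "('a \<Rightarrow> 'a \<Rightarrow> bool) \<Rightarrow> ('a \<Rightarrow> 'a option) \<Rightarrow> 'a \<Rightarrow> 'a \<Rightarrow> ('a \<Rightarrow> 'a option)" where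
  "rot E p a b = (\<lambda>x.
     if x = b then p a
     else if x = a then Some b
     else if p x = Some b then
       (if \<exists>y. in_subtree p x y \<and> E a y then Some a else Some b)
     else p x)"

definition is_rotation :: "('a \<Rightarrow> 'a \<Rightarrow> bool) \<Rightarrow> ('a \<Rightarrow> 'a option) \<Rightarrow> 'a \<Rightarrow> 'a \<Rightarrow> ('a \<Rightarrow> 'a option) \<Rightarrow> bool" where
  "is_rotation E p a b q \<longleftrightarrow> p b = Some a \<and> q = rot E p a b"

fun rot_seq :: "'a set \<Rightarrow> ('a \<Rightarrow> 'a \<Rightarrow> bool) \<Rightarrow> ('a \<Rightarrow> 'a option) \<Rightarrow> ('a \<times> 'a) list
                 \<Rightarrow> ('a \<Rightarrow> 'a option) \<Rightarrow> bool" where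
  "rot_seq V E p [] q \<longleftrightarrow> stree E V p \<and> p = q"
| "rot_seq V E p ((a, b) # ps) q \<longleftrightarrow> stree E V p \<and> p b = Some a \<and> rot_seq V E (rot E p a b) ps q"

definition is_pair :: "'a \<Rightarrow> 'a \<Rightarrow> 'a \<times> 'a \<Rightarrow> bool" where
  "is_pair u v ab \<longleftrightarrow> ab = (u, v) \<or> ab = (v, u)"

definition R_edge :: "'a set \<Rightarrow> ('a \<Rightarrow> 'a \<Rightarrow> bool) \<Rightarrow> ('a \<Rightarrow> 'a option) \<Rightarrow> ('a \<Rightarrow> 'a option) \<Rightarrow> bool" where
  "R_edge V E p q \<longleftrightarrow> stree E V p \<and> stree E V q \<and>
     (\<exists>a b. is_rotation E p a b q \<or> is_rotation E q a b p)"

definition uv_edge :: "('a \<Rightarrow> 'a \<Rightarrow> bool) \<Rightarrow> 'a \<Rightarrow> 'a \<Rightarrow> ('a \<Rightarrow> 'a option) \<Rightarrow> ('a \<Rightarrow> 'a option) \<Rightarrow> bool" where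
  "uv_edge E u v p q \<longleftrightarrow> (\<exists>a b. is_pair u v (a, b) \<and> (is_rotation E p a b q \<or> is_rotation E q a b p))"

text \<open>A path in R(G) from p to q, given as its list of vertices; its length is length - 1.\<close>
definition R_path :: "'a set \<Rightarrow> ('a \<Rightarrow> 'a \<Rightarrow> bool) \<Rightarrow> ('a \<Rightarrow> 'a option) list
                      \<Rightarrow> ('a \<Rightarrow> 'a option) \<Rightarrow> ('a \<Rightarrow> 'a option) \<Rightarrow> bool" where
  "R_path V E xs p q \<longleftrightarrow> xs \<noteq> [] \<and> hd xs = p \<and> last xs = q \<and> stree E V p \<and>
     (\<forall>i. Suc i < length xs \<longrightarrow> R_edge V E (xs ! i) (xs ! Suc i))"

definition min_R_path where
  "min_R_path V E xs p q \<longleftrightarrow> R_path V E xs p q \<and>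
     (\<forall>ys. R_path V E ys p q \<longrightarrow> length xs \<le> length ys)"

definition num_uv_edges where
  "num_uv_edges E u v xs = card {i. Suc i < length xs \<and> uv_edge E u v (xs ! i) (xs ! Suc i)}"

definition diff_order where
  "diff_order T T' u v \<longleftrightarrow> (anc T u v \<and> anc T' v u) \<or> (anc T v u \<and> anc T' u v)"

definition same_order where
  "same_order T T' u v \<longleftrightarrow> (anc T u v \<and> anc T' u v) \<or> (anc T v u \<and> anc T' v u)"

definition true_twins :: "'a set \<Rightarrow> ('a \<Rightarrow> 'a \<Rightarrow> bool) \<Rightarrow> 'a \<Rightarrow> 'a \<Rightarrow> bool" where
  "true_twins V E u v \<longleftrightarrow> {x \<in> V. x = u \<or> E u x} = {x \<in> V. x = v \<or> E v x}"

end

theory Submission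
  imports Defs
begin


definition PR :: "('a \<Rightarrow> 'a option) \<Rightarrow> ('a \<times> 'a) set" where
  "PR p = {(x,y). p x = Some y}"

lemma PR_iff[simp]: "(x,y) \<in> PR p \<longleftrightarrow> p x = Some y" by (simp add: PR_def)

lemma anc_PR: "anc p u v \<longleftrightarrow> (v,u) \<in> (PR p)\<^sup>+" by (simp add: anc_def PR_def)

lemma ins_PR: "in_subtree p w y \<longleftrightarrow> (y,w) \<in> (PR p)\<^sup>*"
  by (auto simp: in_subtree_def anc_PR rtrancl_eq_or_trancl)

lemma rt_comp:
  assumes "(y,z) \<in> (PR p)\<^sup>*" "(y,c) \<in> (PR p)\<^sup>*"
  shows "(z,c) \<in> (PR p)\<^sup>* \<or> (c,z) \<in> (PR p)\<^sup>*"
  using assms(1)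
proof (induction rule: rtrancl_induct)
  case base then show ?case using assms(2) by blast
next
  case (step z z')
  from step.IH show ?case
  proof
    assume "(z,c) \<in> (PR p)\<^sup>*"
    then show ?thesis
    proof (cases rule: converse_rtranclE)
      case base then show ?thesis using step.hyps(2) by auto
    next
      case (step w)
      with \<open>(z,z') \<in> PR p\<close> have "w = z'" by simp
      with step show ?thesis by simp
    qed
  next
    assume "(c,z) \<in> (PR p)\<^sup>*"
    then show ?thesis using step.hyps(2) by (meson rtrancl.rtrancl_into_rtrancl)
  qed
qed

lemma chain_transfer:
  assumes "(y,z) \<in> (PR p)\<^sup>*"
    and "\<forall>x. (y,x) \<in> (PR p)\<^sup>* \<longrightarrow> (x,z) \<in> (PR p)\<^sup>+ \<longrightarrow> q x = p x"
  shows "(y,z) \<in> (PR q)\<^sup>*"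
  using assms
proof (induction rule: converse_rtrancl_induct)
  case base then show ?case by simp
next
  case (step y y')
  have yy: "(y, y') \<in> PR p" by fact
  have "\<forall>x. (y',x) \<in> (PR p)\<^sup>* \<longrightarrow> (x,z) \<in> (PR p)\<^sup>+ \<longrightarrow> q x = p x"
    using step.prems yy converse_rtrancl_into_rtrancl by metis
  then have "(y',z) \<in> (PR q)\<^sup>*" using step.IH by blast
  moreover have "(y,z) \<in> (PR p)\<^sup>+" using yy step.hyps(2) by (rule rtrancl_into_trancl2)
  then have "q y = p y" using step.prems by blast
  ultimately show ?case using yy
    by (metis PR_iff converse_rtrancl_into_rtrancl)
qed

lemma PR_sub: "(\<And>x y. p x = Some y \<Longrightarrow> q x = Some y) \<Longrightarrow> PR p \<subseteq> PR q"
  by auto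

lemma PR_mono_tr: "(\<And>x y. p x = Some y \<Longrightarrow> q x = Some y) \<Longrightarrow> (a,b) \<in> (PR p)\<^sup>* \<Longrightarrow> (a,b) \<in> (PR q)\<^sup>*"
  using rtrancl_mono[OF PR_sub] by blast

lemma PR_mono_tr1: "(\<And>x y. p x = Some y \<Longrightarrow> q x = Some y) \<Longrightarrow> (a,b) \<in> (PR p)\<^sup>+ \<Longrightarrow> (a,b) \<in> (PR q)\<^sup>+"
  using trancl_mono[OF _ PR_sub] by blast

lemma root_rt: "p r = None \<Longrightarrow> (r,z) \<in> (PR p)\<^sup>* \<longleftrightarrow> z = r"
proof
  assume "p r = None" "(r,z) \<in> (PR p)\<^sup>*"
  from this(2) show "z = r" by (cases rule: converse_rtranclE) (use \<open>p r = None\<close> in auto)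
qed simp

lemma tr_step_iff: "p x = Some y \<Longrightarrow> (x,z) \<in> (PR p)\<^sup>+ \<longleftrightarrow> (y,z) \<in> (PR p)\<^sup>*"
proof
  assume a: "p x = Some y" "(x,z) \<in> (PR p)\<^sup>+"
  from a(2) obtain w where "(x,w) \<in> PR p" "(w,z) \<in> (PR p)\<^sup>*"
    using tranclD by metis
  then show "(y,z) \<in> (PR p)\<^sup>*" using a(1) by simp
next
  assume "p x = Some y" "(y,z) \<in> (PR p)\<^sup>*"
  then show "(x,z) \<in> (PR p)\<^sup>+" by (simp add: rtrancl_into_trancl2)
qed

section \<open>Graph components\<close>

definition sg :: "('a \<Rightarrow> 'a \<Rightarrow> bool) \<Rightarrow> bool" where
  "sg E \<longleftrightarrow> (\<forall>x y. E x y \<longrightarrow> E y x \<and> x \<noteq> y)"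

definition ER where "ER E S = {(a, b). a \<in> S \<and> b \<in> S \<and> E a b}"

lemma reach_ER: "reach_in E S x y \<longleftrightarrow> x \<in> S \<and> (x,y) \<in> (ER E S)\<^sup>*"
  by (simp add: reach_in_def ER_def)

lemma ER_rt_in: "(x,y) \<in> (ER E S)\<^sup>* \<Longrightarrow> x \<in> S \<Longrightarrow> y \<in> S"
  by (induction rule: rtrancl_induct) (auto simp: ER_def)

lemma reach_in_S: "reach_in E S x y \<Longrightarrow> x \<in> S \<and> y \<in> S"
proof -
  assume "reach_in E S x y"
  then have "x \<in> S" "(x,y) \<in> (ER E S)\<^sup>*" by (simp_all add: reach_ER)
  then show ?thesis using ER_rt_in[of x y E S] by simp
qed

lemma reach_refl: "x \<in> S \<Longrightarrow> reach_in E S x x" by (simp add: reach_ER)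

lemma reach_trans: "reach_in E S x y \<Longrightarrow> reach_in E S y z \<Longrightarrow> reach_in E S x z"
proof -
  assume "reach_in E S x y" "reach_in E S y z"
  then have "x \<in> S" "(x,y) \<in> (ER E S)\<^sup>*" "(y,z) \<in> (ER E S)\<^sup>*" by (simp_all add: reach_ER)
  then show ?thesis using rtrancl_trans[of x y "ER E S" z] by (simp add: reach_ER)
qed

lemma reach_sym: "sg E \<Longrightarrow> reach_in E S x y \<Longrightarrow> reach_in E S y x"
proof -
  assume sg: "sg E" and r: "reach_in E S x y"
  have "sym (ER E S)" using sg unfolding sym_def ER_def sg_def by auto
  then have "sym ((ER E S)\<^sup>*)" by (rule sym_rtrancl)
  moreover have "(x,y) \<in> (ER E S)\<^sup>*" using r by (simp add: reach_ER)
  ultimately have "(y,x) \<in> (ER E S)\<^sup>*" by (rule symD)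
  moreover have "y \<in> S" using reach_in_S[OF r] by simp
  ultimately show ?thesis by (simp add: reach_ER)
qed

lemma reach_edge: "x \<in> S \<Longrightarrow> y \<in> S \<Longrightarrow> E x y \<Longrightarrow> reach_in E S x y"
  by (auto simp: reach_ER ER_def)

lemma ER_mono: "S \<subseteq> S' \<Longrightarrow> ER E S \<subseteq> ER E S'"
  unfolding ER_def by auto

lemma reach_mono: "reach_in E S x y \<Longrightarrow> S \<subseteq> S' \<Longrightarrow> reach_in E S' x y"
  unfolding reach_ER using rtrancl_mono[OF ER_mono] by blast

lemma reach_closed:
  assumes "reach_in E S x y" "x \<in> X"
    and "\<And>a b. a \<in> X \<Longrightarrow> b \<in> S \<Longrightarrow> a \<in> S \<Longrightarrow> E a b \<Longrightarrow> b \<in> X"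
  shows "y \<in> X \<and> reach_in E (S \<inter> X) x y"
proof -
  have "(x,y) \<in> (ER E S)\<^sup>*" "x \<in> S" using assms(1) by (auto simp: reach_ER)
  then show ?thesis
  proof (induction rule: rtrancl_induct)
    case base then show ?case using assms(2) reach_refl[of x "S \<inter> X" E] by auto
  next
    case (step y z)
    then have "y \<in> X" "y \<in> S" "z \<in> S" "E y z" by (auto simp: ER_def)
    then have "z \<in> X" using assms(3) by blast
    then show ?case using step reach_trans reach_edge \<open>y \<in> X\<close> \<open>y \<in> S\<close> \<open>z \<in> S\<close> \<open>E y z\<close>
      by (metis IntI)
  qed
qed

lemma reach_leave:
  assumes "reach_in E S x y" "x \<in> X" "y \<notin> X"
  shows "\<exists>a b. a \<in> S \<inter> X \<and> b \<in> S - X \<and> E a b"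
proof (rule ccontr)
  assume n: "\<not> (\<exists>a b. a \<in> S \<inter> X \<and> b \<in> S - X \<and> E a b)"
  have "\<And>a b. a \<in> X \<Longrightarrow> b \<in> S \<Longrightarrow> a \<in> S \<Longrightarrow> E a b \<Longrightarrow> b \<in> X" using n by auto
  from reach_closed[OF assms(1,2) this] have "y \<in> X" by simp
  with assms(3) show False by simp
qed

lemma connected_onI:
  assumes "a \<in> S" "\<And>y. y \<in> S \<Longrightarrow> reach_in E S y a" "sg E"
  shows "connected_on E S"
  unfolding connected_on_def
proof (intro conjI ballI)
  show "S \<noteq> {}" using assms(1) by auto
  fix x y assume "x \<in> S" "y \<in> S"
  have "reach_in E S x a" using assms(2) \<open>x \<in> S\<close> .
  moreover have "reach_in E S a y" using reach_sym[OF assms(3) assms(2)[OF \<open>y \<in> S\<close>]] .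
  ultimately show "reach_in E S x y" by (rule reach_trans)
qed

lemma comp_conn:
  assumes "sg E" "x \<in> S"
  shows "connected_on E {y. reach_in E S x y}"
proof (rule connected_onI[OF _ _ assms(1)])
  let ?C = "{y. reach_in E S x y}"
  show "x \<in> ?C" using assms reach_refl by auto
  fix y assume "y \<in> ?C"
  then have r: "reach_in E S y x" using reach_sym[OF assms(1)] by simp
  have "x \<in> ?C \<and> reach_in E (S \<inter> ?C) y x"
  proof (rule reach_closed[OF r])
    show "y \<in> ?C" by fact
    fix a b assume "a \<in> ?C" "b \<in> S" "a \<in> S" "E a b"
    then have "reach_in E S a b" by (rule_tac reach_edge)
    then show "b \<in> ?C" using \<open>a \<in> ?C\<close> reach_trans[of E S x a b] by simp
  qed
  moreover have "S \<inter> ?C = ?C" using reach_in_S by fastforce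
  ultimately show "reach_in E ?C y x" by simp
qed

lemma comp_same:
  assumes "sg E" "reach_in E S x y"
  shows "{z. reach_in E S x z} = {z. reach_in E S y z}"
proof -
  have "reach_in E S y x" using reach_sym[OF assms] .
  then show ?thesis using assms(2) reach_trans[of E S x y] reach_trans[of E S y x] by auto
qed



definition gt :: "('a \<Rightarrow> 'a \<Rightarrow> bool) \<Rightarrow> 'a set \<Rightarrow> ('a \<Rightarrow> 'a option) \<Rightarrow> bool" where
  "gt E S p \<longleftrightarrow> (\<forall>x. x \<notin> S \<longrightarrow> p x = None) \<and> (\<forall>x y. p x = Some y \<longrightarrow> y \<in> S) \<and>
     (\<forall>x. (x,x) \<notin> (PR p)\<^sup>+) \<and> (\<exists>r\<in>S. p r = None \<and> (\<forall>x\<in>S. (x,r) \<in> (PR p)\<^sup>*)) \<and>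
     (\<forall>x\<in>S. \<forall>y\<in>S. E x y \<longrightarrow> (x,y) \<in> (PR p)\<^sup>+ \<or> (y,x) \<in> (PR p)\<^sup>+) \<and>
     (\<forall>w\<in>S. connected_on E {y. (y,w) \<in> (PR p)\<^sup>*})"

lemma gt_out: "gt E S p \<Longrightarrow> x \<notin> S \<Longrightarrow> p x = None" by (simp add: gt_def)
lemma gt_val: "gt E S p \<Longrightarrow> p x = Some y \<Longrightarrow> y \<in> S" by (simp add: gt_def)
lemma gt_dom: "gt E S p \<Longrightarrow> p x = Some y \<Longrightarrow> x \<in> S" unfolding gt_def by force
lemma gt_acyc: "gt E S p \<Longrightarrow> (x,x) \<notin> (PR p)\<^sup>+" by (simp add: gt_def)
lemma gt_root: "gt E S p \<Longrightarrow> \<exists>r\<in>S. p r = None \<and> (\<forall>x\<in>S. (x,r) \<in> (PR p)\<^sup>*)" by (simp add: gt_def)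
lemma gt_edge: "gt E S p \<Longrightarrow> x \<in> S \<Longrightarrow> y \<in> S \<Longrightarrow> E x y \<Longrightarrow> (x,y) \<in> (PR p)\<^sup>+ \<or> (y,x) \<in> (PR p)\<^sup>+"
  by (simp add: gt_def)
lemma gt_conn: "gt E S p \<Longrightarrow> w \<in> S \<Longrightarrow> connected_on E {y. (y,w) \<in> (PR p)\<^sup>*}" by (simp add: gt_def)

lemma gt_tr_dom: "gt E S p \<Longrightarrow> (x,z) \<in> (PR p)\<^sup>+ \<Longrightarrow> x \<in> S \<and> z \<in> S"
proof -
  assume g: "gt E S p" and t: "(x,z) \<in> (PR p)\<^sup>+"
  from t obtain y where "p x = Some y" by (cases rule: converse_tranclE) auto
  moreover from t obtain y' where "p y' = Some z" by (cases rule: tranclE) auto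
  ultimately show ?thesis using gt_dom[OF g] gt_val[OF g] by blast
qed

lemma gt_rt_closed: "gt E S p \<Longrightarrow> x \<in> S \<Longrightarrow> (x,z) \<in> (PR p)\<^sup>* \<Longrightarrow> z \<in> S"
  using gt_tr_dom rtranclD by metis

lemma gt_root_unique: "gt E S p \<Longrightarrow> r \<in> S \<Longrightarrow> p r = None \<Longrightarrow> x \<in> S \<Longrightarrow> (x,r) \<in> (PR p)\<^sup>*"
proof -
  assume g: "gt E S p" and r: "r \<in> S" "p r = None" and x: "x \<in> S"
  obtain r' where r': "r' \<in> S" "p r' = None" "\<forall>x\<in>S. (x,r') \<in> (PR p)\<^sup>*" using gt_root[OF g] by blast
  have "(r,r') \<in> (PR p)\<^sup>*" using r' r by blast
  then have "r' = r" using root_rt[of p r r'] r by simp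
  then show ?thesis using r' x by blast
qed

lemma sub_char:
  assumes gtC: "gt E C q" and q_def: "q = (\<lambda>x. if x \<in> C \<and> x \<noteq> c then p x else None)"
    and pc: "p c = Some r" and c: "c \<in> C" and pr: "p r = None" and x: "x \<in> C"
  shows "(x,z) \<in> (PR p)\<^sup>* \<longleftrightarrow> (x,z) \<in> (PR q)\<^sup>* \<or> z = r"
proof -
  have qc: "q c = None" using q_def by simp
  have qp: "\<And>a b. q a = Some b \<Longrightarrow> p a = Some b" using q_def by (auto split: if_splits)
  have toc: "(x,c) \<in> (PR q)\<^sup>*" using gt_root_unique[OF gtC c qc x] .
  show ?thesis
  proof
    assume "(x,z) \<in> (PR p)\<^sup>*"
    then show "(x,z) \<in> (PR q)\<^sup>* \<or> z = r"
    proof (induction rule: rtrancl_induct)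
      case base then show ?case by simp
    next
      case (step z z')
      from step.IH show ?case
      proof
        assume xz: "(x,z) \<in> (PR q)\<^sup>*"
        then have zC: "z \<in> C" using gt_rt_closed[OF gtC x] by blast
        show ?thesis
        proof (cases "z = c")
          case True then show ?thesis using step.hyps(2) pc by simp
        next
          case False
          then have "q z = Some z'" using q_def zC step.hyps(2) by simp
          then show ?thesis using xz by (simp add: rtrancl_into_rtrancl)
        qed
      next
        assume "z = r" then show ?thesis using step.hyps(2) pr by simp
      qed
    qed
  next
    assume "(x,z) \<in> (PR q)\<^sup>* \<or> z = r"
    then show "(x,z) \<in> (PR p)\<^sup>*"
    proof
      assume "(x,z) \<in> (PR q)\<^sup>*" then show ?thesis using PR_mono_tr[of q p x z] qp by blast
    next
      assume "z = r"
      have "(x,c) \<in> (PR p)\<^sup>*" using PR_mono_tr[of q p x c] qp toc by blast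
      then show ?thesis using pc \<open>z = r\<close> by (simp add: rtrancl_into_rtrancl)
    qed
  qed
qed


lemma rt_neq_tr: "(x,z) \<in> (PR p)\<^sup>* \<Longrightarrow> x \<noteq> z \<Longrightarrow> (x,z) \<in> (PR p)\<^sup>+"
  by (simp add: rtrancl_eq_or_trancl)

lemma stree_gt:
  assumes "stree E S p" "sg E"
  shows "gt E S p"
  using assms(1)
proof induction
  case (1 r S p)
  define K where "K x = {y. reach_in E (S - {r}) x y}" for x
  define rs where "rs C c = (\<lambda>x. if x \<in> C \<and> x \<noteq> c then p x else None)" for C c
  have info: "\<exists>c. c \<in> K x \<and> p c = Some r \<and> gt E (K x) (rs (K x) c)" if "x \<in> S - {r}" for x
  proof -
    have "K x \<in> components E (S - {r})" unfolding K_def components_def using that by blast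
    then show ?thesis using "1.IH" unfolding rs_def by blast
  qed
  have xK: "x \<in> K x" if "x \<in> S - {r}" for x unfolding K_def using reach_refl[OF that] by simp
  have KS: "K x \<subseteq> S - {r}" for x unfolding K_def by (auto dest: reach_in_S)
  have char: "(y,z) \<in> (PR p)\<^sup>* \<longleftrightarrow> (y,z) \<in> (PR (rs (K x) c))\<^sup>* \<or> z = r"
    if "y \<in> K x" "c \<in> K x" "p c = Some r" "gt E (K x) (rs (K x) c)" for x y z c
    using sub_char[OF that(4) rs_def that(3) that(2) "1.hyps"(3) that(1)] .
  have rsp: "rs C c a = Some b \<Longrightarrow> p a = Some b" for C c a b unfolding rs_def by (auto split: if_splits)
  have T1: "\<forall>x. x \<notin> S \<longrightarrow> p x = None" using "1.hyps"(4) by blast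
  have T2: "\<forall>x y. p x = Some y \<longrightarrow> y \<in> S"
  proof (intro allI impI)
    fix x y assume pxy: "p x = Some y"
    then have x: "x \<in> S - {r}" using T1 "1.hyps"(3) by fastforce
    obtain c where c: "c \<in> K x" "p c = Some r" "gt E (K x) (rs (K x) c)" using info[OF x] by blast
    show "y \<in> S"
    proof (cases "x = c")
      case True then show ?thesis using pxy c "1.hyps"(1) by simp
    next
      case False
      then have "rs (K x) c x = Some y" using pxy xK[OF x] unfolding rs_def by simp
      then have "y \<in> K x" using gt_val[OF c(3)] by blast
      then show ?thesis using KS by blast
    qed
  qed
  have T3: "\<forall>x. (x,x) \<notin> (PR p)\<^sup>+"
  proof (intro allI notI)
    fix x assume xx: "(x,x) \<in> (PR p)\<^sup>+"
    then obtain y where pxy: "p x = Some y" by (cases rule: converse_tranclE) auto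
    have yx: "(y,x) \<in> (PR p)\<^sup>*" using tr_step_iff[of p x y, OF pxy] xx by simp
    then have x: "x \<in> S - {r}" using T1 "1.hyps"(3) pxy by fastforce
    obtain c where c: "c \<in> K x" "p c = Some r" "gt E (K x) (rs (K x) c)" using info[OF x] by blast
    show False
    proof (cases "x = c")
      case True
      then have "y = r" using pxy c by simp
      then show False using yx root_rt[of p r x] "1.hyps"(3) x by simp
    next
      case False
      then have q: "rs (K x) c x = Some y" using pxy xK[OF x] unfolding rs_def by simp
      then have yK: "y \<in> K x" using gt_val[OF c(3)] by blast
      have "(y,x) \<in> (PR (rs (K x) c))\<^sup>*" using char[OF yK c] yx x by blast
      then have "(x,x) \<in> (PR (rs (K x) c))\<^sup>+" using q by (simp add: rtrancl_into_trancl2)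
      then show False using gt_acyc[OF c(3)] by blast
    qed
  qed
  have toroot: "(x,r) \<in> (PR p)\<^sup>*" if "x \<in> S" for x
  proof (cases "x = r")
    case False
    then have x: "x \<in> S - {r}" using that by simp
    obtain c where c: "c \<in> K x" "p c = Some r" "gt E (K x) (rs (K x) c)" using info[OF x] by blast
    show ?thesis using char[OF xK[OF x] c] by simp
  qed simp
  have T4: "\<exists>r\<in>S. p r = None \<and> (\<forall>x\<in>S. (x,r) \<in> (PR p)\<^sup>*)"
    using "1.hyps"(1,3) toroot by blast
  have T5: "\<forall>x\<in>S. \<forall>y\<in>S. E x y \<longrightarrow> (x,y) \<in> (PR p)\<^sup>+ \<or> (y,x) \<in> (PR p)\<^sup>+"
  proof (intro ballI impI)
    fix x y assume xy: "x \<in> S" "y \<in> S" "E x y"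
    then have "x \<noteq> y" using assms(2) unfolding sg_def by blast
    show "(x,y) \<in> (PR p)\<^sup>+ \<or> (y,x) \<in> (PR p)\<^sup>+"
    proof (cases "x = r \<or> y = r")
      case True
      then show ?thesis using toroot xy \<open>x \<noteq> y\<close> rt_neq_tr by metis
    next
      case False
      then have x: "x \<in> S - {r}" and y: "y \<in> S - {r}" using xy by auto
      obtain c where c: "c \<in> K x" "p c = Some r" "gt E (K x) (rs (K x) c)" using info[OF x] by blast
      have "reach_in E (S - {r}) x y" using reach_edge[of x "S - {r}" y E, OF x y xy(3)] .
      then have yK: "y \<in> K x" unfolding K_def by simp
      have "(x,y) \<in> (PR (rs (K x) c))\<^sup>+ \<or> (y,x) \<in> (PR (rs (K x) c))\<^sup>+"
        using gt_edge[OF c(3) xK[OF x] yK xy(3)] .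
      then show ?thesis using PR_mono_tr1[of "rs (K x) c" p] rsp by blast
    qed
  qed
  have T6: "\<forall>w\<in>S. connected_on E {y. (y,w) \<in> (PR p)\<^sup>*}"
  proof
    fix w assume w: "w \<in> S"
    show "connected_on E {y. (y,w) \<in> (PR p)\<^sup>*}"
    proof (cases "w = r")
      case True
      have "{y. (y,w) \<in> (PR p)\<^sup>*} = S"
      proof
        show "{y. (y,w) \<in> (PR p)\<^sup>*} \<subseteq> S"
        proof
          fix y assume "y \<in> {y. (y,w) \<in> (PR p)\<^sup>*}"
          then have "(y,w) \<in> (PR p)\<^sup>*" by simp
          then show "y \<in> S"
          proof (cases rule: converse_rtranclE)
            case base then show ?thesis using w by simp
          next
            case (step z) then show ?thesis using T1 by fastforce
          qed
        qed
        show "S \<subseteq> {y. (y,w) \<in> (PR p)\<^sup>*}" using toroot True by blast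
      qed
      then show ?thesis using "1.hyps"(2) by simp
    next
      case False
      then have wx: "w \<in> S - {r}" using w by simp
      obtain c where c: "c \<in> K w" "p c = Some r" "gt E (K w) (rs (K w) c)" using info[OF wx] by blast
      have "{y. (y,w) \<in> (PR p)\<^sup>*} = {y. (y,w) \<in> (PR (rs (K w) c))\<^sup>*}"
      proof (intro set_eqI iffI)
        fix y assume "y \<in> {y. (y,w) \<in> (PR (rs (K w) c))\<^sup>*}"
        then show "y \<in> {y. (y,w) \<in> (PR p)\<^sup>*}" using PR_mono_tr[of "rs (K w) c" p] rsp by blast
      next
        fix y assume "y \<in> {y. (y,w) \<in> (PR p)\<^sup>*}"
        then have yw: "(y,w) \<in> (PR p)\<^sup>*" by simp
        show "y \<in> {y. (y,w) \<in> (PR (rs (K w) c))\<^sup>*}"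
        proof (cases "y = w")
          case True then show ?thesis by simp
        next
          case False
          from yw obtain z where "p y = Some z" using False by (cases rule: converse_rtranclE) auto
          then have yS: "y \<in> S" using T1 by fastforce
          have "y \<noteq> r" using yw root_rt[of p r w] "1.hyps"(3) False \<open>w \<noteq> r\<close> by auto
          then have y: "y \<in> S - {r}" using yS by simp
          obtain c' where c': "c' \<in> K y" "p c' = Some r" "gt E (K y) (rs (K y) c')" using info[OF y] by blast
          have "(y,w) \<in> (PR (rs (K y) c'))\<^sup>*" using char[OF xK[OF y] c'] yw \<open>w \<noteq> r\<close> by blast
          then have "w \<in> K y" using gt_rt_closed[OF c'(3) xK[OF y]] by blast
          then have "K y = K w" unfolding K_def using comp_same[OF assms(2)] by simp
          then have "c' = c"
          proof -
            have "rs (K w) c' c = None"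
            proof (rule ccontr)
              assume "rs (K w) c' c \<noteq> None"
              then have "p c = rs (K w) c' c" using c(1) unfolding rs_def by (auto split: if_splits)
              then show False using \<open>K y = K w\<close> c'(3) c(2)
                gt_val[of E "K y" "rs (K y) c'" c r] KS by auto
            qed
            then show ?thesis using c(1) c(2) unfolding rs_def by (auto split: if_splits)
          qed
          then show ?thesis using \<open>(y,w) \<in> (PR (rs (K y) c'))\<^sup>*\<close> \<open>K y = K w\<close> by simp
        qed
      qed
      then show ?thesis using gt_conn[OF c(3) xK[OF wx]] by simp
    qed
  qed
  show ?case unfolding gt_def using T1 T2 T3 T4 T5 T6 by blast
qed



lemma gt_D_sub: "gt E S p \<Longrightarrow> c \<in> S \<Longrightarrow> (y,c) \<in> (PR p)\<^sup>* \<Longrightarrow> y \<in> S"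
proof -
  assume g: "gt E S p" "c \<in> S" "(y,c) \<in> (PR p)\<^sup>*"
  show "y \<in> S"
  proof (cases "y = c")
    case False then show ?thesis using gt_tr_dom[OF g(1)] rt_neq_tr[OF g(3)] by blast
  qed (use g in simp)
qed

lemma sub_chain:
  assumes g: "gt E S p" and q: "q = (\<lambda>x. if (x,c) \<in> (PR p)\<^sup>* \<and> x \<noteq> c then p x else None)"
    and y: "(y,c) \<in> (PR p)\<^sup>*" and z: "(z,c) \<in> (PR p)\<^sup>*" and yz: "(y,z) \<in> (PR p)\<^sup>*"
  shows "(y,z) \<in> (PR q)\<^sup>*"
proof (rule chain_transfer[OF yz], intro allI impI)
  fix x assume "(y,x) \<in> (PR p)\<^sup>*" "(x,z) \<in> (PR p)\<^sup>+"
  then have xc: "(x,c) \<in> (PR p)\<^sup>*" using z by (meson trancl_into_rtrancl rtrancl_trans)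
  have "x \<noteq> c"
  proof
    assume "x = c"
    then have "(c,c) \<in> (PR p)\<^sup>+" using \<open>(x,z) \<in> (PR p)\<^sup>+\<close> z by (meson trancl_rtrancl_trancl)
    then show False using gt_acyc[OF g] by blast
  qed
  then show "q x = p x" using q xc by simp
qed

lemma gt_sub:
  assumes g: "gt E S p" and c: "c \<in> S"
  shows "gt E {y. (y,c) \<in> (PR p)\<^sup>*} (\<lambda>x. if x \<in> {y. (y,c) \<in> (PR p)\<^sup>*} \<and> x \<noteq> c then p x else None)"
proof -
  define D where "D = {y. (y,c) \<in> (PR p)\<^sup>*}"
  define q where "q = (\<lambda>x. if (x,c) \<in> (PR p)\<^sup>* \<and> x \<noteq> c then p x else None)"
  have qq: "(\<lambda>x. if x \<in> D \<and> x \<noteq> c then p x else None) = q" unfolding q_def D_def by simp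
  have sc: "(y,z) \<in> (PR q)\<^sup>*" if "y \<in> D" "z \<in> D" "(y,z) \<in> (PR p)\<^sup>*" for y z
    using sub_chain[OF g q_def] that unfolding D_def by blast
  have qp: "\<And>a b. q a = Some b \<Longrightarrow> p a = Some b" unfolding q_def by (auto split: if_splits)
  have DS: "D \<subseteq> S" unfolding D_def using gt_D_sub[OF g c] by blast
  have T1: "\<forall>x. x \<notin> D \<longrightarrow> q x = None" unfolding q_def D_def by simp
  have T2: "\<forall>x y. q x = Some y \<longrightarrow> y \<in> D"
  proof (intro allI impI)
    fix x y assume "q x = Some y"
    then have "(x,c) \<in> (PR p)\<^sup>*" "x \<noteq> c" "p x = Some y" unfolding q_def by (auto split: if_splits)
    then have "(x,c) \<in> (PR p)\<^sup>+" by (simp add: rt_neq_tr)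
    then show "y \<in> D" using tr_step_iff[of p x y c] \<open>p x = Some y\<close> unfolding D_def by simp
  qed
  have T3: "\<forall>x. (x,x) \<notin> (PR q)\<^sup>+" using PR_mono_tr1[of q p] qp gt_acyc[OF g] by blast
  have T4: "\<exists>r\<in>D. q r = None \<and> (\<forall>x\<in>D. (x,r) \<in> (PR q)\<^sup>*)"
  proof (intro bexI conjI ballI)
    show "c \<in> D" unfolding D_def by simp
    show "q c = None" unfolding q_def by simp
    fix x assume "x \<in> D" then show "(x,c) \<in> (PR q)\<^sup>*" using sc[of x c] \<open>c \<in> D\<close> unfolding D_def by simp
  qed
  have T5: "\<forall>x\<in>D. \<forall>y\<in>D. E x y \<longrightarrow> (x,y) \<in> (PR q)\<^sup>+ \<or> (y,x) \<in> (PR q)\<^sup>+"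
  proof (intro ballI impI)
    fix x y assume xy: "x \<in> D" "y \<in> D" "E x y"
    have "(x,y) \<in> (PR p)\<^sup>+ \<or> (y,x) \<in> (PR p)\<^sup>+" using gt_edge[OF g] xy DS by blast
    then show "(x,y) \<in> (PR q)\<^sup>+ \<or> (y,x) \<in> (PR q)\<^sup>+"
    proof
      assume a: "(x,y) \<in> (PR p)\<^sup>+"
      then have "x \<noteq> y" using gt_acyc[OF g] by blast
      then show ?thesis using sc[OF xy(1,2)] a rt_neq_tr by (meson trancl_into_rtrancl)
    next
      assume a: "(y,x) \<in> (PR p)\<^sup>+"
      then have "x \<noteq> y" using gt_acyc[OF g] by blast
      have "(y,x) \<in> (PR q)\<^sup>*" using sc[OF xy(2,1)] a by (simp add: trancl_into_rtrancl)
      then show ?thesis using rt_neq_tr[of y x q] \<open>x \<noteq> y\<close> by auto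
    qed
  qed
  have T6: "\<forall>w\<in>D. connected_on E {y. (y,w) \<in> (PR q)\<^sup>*}"
  proof
    fix w assume w: "w \<in> D"
    have "{y. (y,w) \<in> (PR q)\<^sup>*} = {y. (y,w) \<in> (PR p)\<^sup>*}"
    proof (intro set_eqI iffI)
      fix y assume "y \<in> {y. (y,w) \<in> (PR q)\<^sup>*}"
      then show "y \<in> {y. (y,w) \<in> (PR p)\<^sup>*}" using PR_mono_tr[of q p] qp by blast
    next
      fix y assume "y \<in> {y. (y,w) \<in> (PR p)\<^sup>*}"
      then have yw: "(y,w) \<in> (PR p)\<^sup>*" by simp
      then have "y \<in> D" using w rtrancl_trans[of y w "PR p" c] unfolding D_def by simp
      then show "y \<in> {y. (y,w) \<in> (PR q)\<^sup>*}" using sc[OF _ w yw] by simp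
    qed
    then show "connected_on E {y. (y,w) \<in> (PR q)\<^sup>*}" using gt_conn[OF g] w DS by auto
  qed
  have "gt E D q" unfolding gt_def using T1 T2 T3 T4 T5 T6 by blast
  then show ?thesis using qq D_def by simp
qed


lemma child_comp:
  assumes g: "gt E S p" and sg: "sg E" and r: "r \<in> S" "p r = None" and pc: "p c = Some r"
    and x: "(x,c) \<in> (PR p)\<^sup>*"
  shows "{y. reach_in E (S - {r}) x y} = {y. (y,c) \<in> (PR p)\<^sup>*}"
proof -
  define D where "D = {y. (y,c) \<in> (PR p)\<^sup>*}"
  have cS: "c \<in> S" using gt_dom[OF g pc] .
  have DS: "D \<subseteq> S - {r}"
  proof
    fix y assume "y \<in> D"
    then have yc: "(y,c) \<in> (PR p)\<^sup>*" unfolding D_def by simp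
    have "y \<in> S" using gt_D_sub[OF g cS yc] .
    moreover have "y \<noteq> r"
    proof
      assume "y = r"
      then have "c = r" using yc root_rt[of p r c] r by simp
      then show False using pc gt_acyc[OF g, of r] by auto
    qed
    ultimately show "y \<in> S - {r}" by simp
  qed
  have xD: "x \<in> D" using x D_def by simp
  show ?thesis
  proof (intro set_eqI iffI)
    fix y assume "y \<in> {y. reach_in E (S - {r}) x y}"
    then have rr: "reach_in E (S - {r}) x y" by simp
    have "y \<in> D \<and> reach_in E ((S - {r}) \<inter> D) x y"
    proof (rule reach_closed[OF rr xD])
      fix a b assume ab: "a \<in> D" "b \<in> S - {r}" "a \<in> S - {r}" "E a b"
      then have ac: "(a,c) \<in> (PR p)\<^sup>*" unfolding D_def by simp
      have "(a,b) \<in> (PR p)\<^sup>+ \<or> (b,a) \<in> (PR p)\<^sup>+" using gt_edge[OF g] ab by blast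
      then show "b \<in> D"
      proof
        assume "(a,b) \<in> (PR p)\<^sup>+"
        then have "(a,b) \<in> (PR p)\<^sup>*" by simp
        from rt_comp[OF this ac] show ?thesis
        proof
          assume "(b,c) \<in> (PR p)\<^sup>*" then show ?thesis unfolding D_def by simp
        next
          assume cb: "(c,b) \<in> (PR p)\<^sup>*"
          show ?thesis
          proof (cases "c = b")
            case True then show ?thesis unfolding D_def by simp
          next
            case False
            then have "(c,b) \<in> (PR p)\<^sup>+" using rt_neq_tr[OF cb] by simp
            then have "(r,b) \<in> (PR p)\<^sup>*" using tr_step_iff[of p c r b] pc by simp
            then have "b = r" using root_rt[of p r b] r by simp
            then show ?thesis using ab by simp
          qed
        qed
      next
        assume "(b,a) \<in> (PR p)\<^sup>+"
        then have "(b,c) \<in> (PR p)\<^sup>*" using ac by simp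
        then show ?thesis unfolding D_def by simp
      qed
    qed
    then show "y \<in> {y. (y,c) \<in> (PR p)\<^sup>*}" unfolding D_def by simp
  next
    fix y assume "y \<in> {y. (y,c) \<in> (PR p)\<^sup>*}"
    then have "y \<in> D" unfolding D_def by simp
    have "connected_on E D" using gt_conn[OF g cS] unfolding D_def .
    then have "reach_in E D x y" using xD \<open>y \<in> D\<close> unfolding connected_on_def by blast
    then have "reach_in E (S - {r}) x y" using reach_mono[of E D x y "S - {r}"] DS by simp
    then show "y \<in> {y. reach_in E (S - {r}) x y}" by simp
  qed
qed

lemma gt_stree:
  assumes "finite S" "gt E S p" "sg E"
  shows "stree E S p"
  using assms(1,2)
proof (induction "card S" arbitrary: S p rule: less_induct)
  case less
  note g = less.prems(2)
  obtain r where r: "r \<in> S" "p r = None" "\<forall>x\<in>S. (x,r) \<in> (PR p)\<^sup>*" using gt_root[OF g] by blast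
  have Dr: "{y. (y,r) \<in> (PR p)\<^sup>*} = S"
  proof
    show "{y. (y,r) \<in> (PR p)\<^sup>*} \<subseteq> S" using gt_D_sub[OF g r(1)] by blast
  qed (use r in blast)
  show ?case
  proof (rule stree.intros[of r])
    show "r \<in> S" "p r = None" by fact+
    show "connected_on E S" using gt_conn[OF g r(1)] Dr by simp
    show "\<forall>x. x \<notin> S \<longrightarrow> p x = None" using gt_out[OF g] by blast
    show "\<forall>C\<in>components E (S - {r}). \<exists>c\<in>C. p c = Some r \<and>
         stree E C (\<lambda>x. if x \<in> C \<and> x \<noteq> c then p x else None)"
    proof
      fix C assume "C \<in> components E (S - {r})"
      then obtain x where x: "x \<in> S - {r}" "C = {y. reach_in E (S - {r}) x y}"
        unfolding components_def by blast
      have "(x,r) \<in> (PR p)\<^sup>*" "x \<noteq> r" using r x by auto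
      then have "(x,r) \<in> (PR p)\<^sup>+" by (rule rt_neq_tr)
      then obtain c where xc: "(x,c) \<in> (PR p)\<^sup>*" and "(c,r) \<in> PR p" using tranclD2 by metis
      then have pc: "p c = Some r" by simp
      have CD: "C = {y. (y,c) \<in> (PR p)\<^sup>*}" using child_comp[OF g assms(3) r(1,2) pc xc] x by simp
      have cS: "c \<in> S" using gt_dom[OF g pc] .
      have gC: "gt E C (\<lambda>x. if x \<in> C \<and> x \<noteq> c then p x else None)"
        using gt_sub[OF g cS] CD by simp
      have CS: "C \<subseteq> S" using CD gt_D_sub[OF g cS] by blast
      have "r \<notin> C"
      proof
        assume "r \<in> C"
        then have "c = r" using CD root_rt[of p r c] r by simp
        then show False using pc gt_acyc[OF g, of r] by auto
      qed
      then have "C \<subset> S" using CS r by blast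
      then have "card C < card S" using less.prems(1) by (simp add: psubset_card_mono)
      moreover have "finite C" using CS less.prems(1) finite_subset by blast
      ultimately have "stree E C (\<lambda>x. if x \<in> C \<and> x \<noteq> c then p x else None)"
        using less.hyps gC by blast
      moreover have "c \<in> C" using CD by simp
      ultimately show "\<exists>c\<in>C. p c = Some r \<and> stree E C (\<lambda>x. if x \<in> C \<and> x \<noteq> c then p x else None)"
        using pc by blast
    qed
  qed
qed

lemma stree_iff_gt: "finite S \<Longrightarrow> sg E \<Longrightarrow> stree E S p \<longleftrightarrow> gt E S p"
  using gt_stree stree_gt by blast



lemma rot_b: "rot E p a b b = p a" by (simp add: rot_def)
lemma rot_a: "a \<noteq> b \<Longrightarrow> rot E p a b a = Some b" by (simp add: rot_def)
lemma rot_child: "x \<noteq> b \<Longrightarrow> x \<noteq> a \<Longrightarrow> p x = Some b \<Longrightarrow>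
   rot E p a b x = (if \<exists>y. (y,x) \<in> (PR p)\<^sup>* \<and> E a y then Some a else Some b)"
  by (simp add: rot_def ins_PR)
lemma rot_other: "x \<noteq> b \<Longrightarrow> x \<noteq> a \<Longrightarrow> p x \<noteq> Some b \<Longrightarrow> rot E p a b x = p x"
  by (simp add: rot_def)

lemma rot_step1:
  assumes pb: "p b = Some a" and ab: "a \<noteq> b" and qy: "rot E p a b y = Some z"
  shows "(y,z) \<in> (PR p)\<^sup>+ \<or> (z = b \<and> (y,a) \<in> (PR p)\<^sup>*)"
proof -
  consider "y = b" | "y = a" | "y \<noteq> b" "y \<noteq> a" "p y = Some b" | "y \<noteq> b" "y \<noteq> a" "p y \<noteq> Some b"
    by blast
  then show ?thesis
  proof cases
    case 1
    then have "p a = Some z" using qy rot_b by metis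
    then have "(b,a) \<in> PR p" "(a,z) \<in> PR p" using pb by auto
    then have "(b,z) \<in> (PR p)\<^sup>+" by (meson r_into_trancl trancl_into_trancl2)
    then show ?thesis using 1 by simp
  next
    case 2 then show ?thesis using qy rot_a[OF ab] by simp
  next
    case 3
    then have "z = a \<or> z = b" using qy rot_child[of y b a p E] by (auto split: if_splits)
    then show ?thesis
    proof
      assume "z = a"
      then have "(y,b) \<in> PR p" "(b,z) \<in> PR p" using 3 pb by auto
      then have "(y,z) \<in> (PR p)\<^sup>+" by (meson r_into_trancl trancl_into_trancl2)
      then show ?thesis by simp
    next
      assume "z = b" then show ?thesis using 3 by auto
    qed
  next
    case 4 then have "p y = Some z" using qy rot_other by metis
    then show ?thesis by auto
  qed
qed

lemma rot_anc1:
  assumes pb: "p b = Some a" and ab: "a \<noteq> b" and yz: "(y,z) \<in> (PR (rot E p a b))\<^sup>+"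
  shows "(y,z) \<in> (PR p)\<^sup>+ \<or> (z = b \<and> (y,a) \<in> (PR p)\<^sup>*)"
  using yz
proof (induction rule: trancl_induct)
  case (base z) then show ?case using rot_step1[where p=p and a=a and b=b and E=E, OF pb ab] by simp
next
  case (step z z')
  have s: "(z,z') \<in> (PR p)\<^sup>+ \<or> (z' = b \<and> (z,a) \<in> (PR p)\<^sup>*)" using rot_step1[where p=p and a=a and b=b and E=E, OF pb ab] step.hyps(2) by simp
  from step.IH show ?case
  proof
    assume yz: "(y,z) \<in> (PR p)\<^sup>+"
    from s show ?thesis
    proof
      assume "(z,z') \<in> (PR p)\<^sup>+" then show ?thesis using trancl_trans[OF yz] by blast
    next
      assume "z' = b \<and> (z,a) \<in> (PR p)\<^sup>*"
      then show ?thesis using yz by (meson trancl_into_rtrancl rtrancl_trans)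
    qed
  next
    assume "z = b \<and> (y,a) \<in> (PR p)\<^sup>*"
    then have "p a = Some z'" using step.hyps(2) rot_b by (metis PR_iff)
    then have "(a,z') \<in> PR p" by simp
    then have "(y,z') \<in> (PR p)\<^sup>+" using \<open>z = b \<and> (y,a) \<in> (PR p)\<^sup>*\<close> rtrancl_into_trancl1 by metis
    then show ?thesis by simp
  qed
qed

lemma rot_step2:
  assumes pb: "p b = Some a" and ab: "a \<noteq> b" and py: "p y = Some z"
  shows "(y,z) \<in> (PR (rot E p a b))\<^sup>+ \<or> (z = a \<and> (y,b) \<in> (PR (rot E p a b))\<^sup>*)"
proof -
  let ?q = "rot E p a b"
  consider "y = b" | "y = a" | "y \<noteq> b" "y \<noteq> a" "p y = Some b" | "y \<noteq> b" "y \<noteq> a" "p y \<noteq> Some b"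
    by blast
  then show ?thesis
  proof cases
    case 1 then show ?thesis using pb py by simp
  next
    case 2
    then have "(a,b) \<in> PR ?q" "(b,z) \<in> PR ?q" using rot_a[OF ab, of E p] rot_b[of E p a b] py by auto
    then show ?thesis using 2 by (meson trancl.simps)
  next
    case 3
    then have z: "z = b" using py by simp
    have "?q y = Some a \<or> ?q y = Some b" using 3 rot_child[of y b a p E] by (auto split: if_splits)
    then show ?thesis
    proof
      assume "?q y = Some a"
      then have "(y,a) \<in> PR ?q" "(a,b) \<in> PR ?q" using rot_a[OF ab] by auto
      then show ?thesis using z by (meson trancl.simps)
    next
      assume "?q y = Some b" then show ?thesis using z by auto
    qed
  next
    case 4 then have "?q y = Some z" using py rot_other by metis
    then show ?thesis by auto
  qed
qed

lemma rot_anc2: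
  assumes pb: "p b = Some a" and ab: "a \<noteq> b" and yz: "(y,z) \<in> (PR p)\<^sup>+"
  shows "(y,z) \<in> (PR (rot E p a b))\<^sup>+ \<or> (z = a \<and> (y,b) \<in> (PR (rot E p a b))\<^sup>*)"
  using yz
proof (induction rule: trancl_induct)
  case (base z) then show ?case using rot_step2[where p=p and a=a and b=b and E=E, OF pb ab] by simp
next
  case (step z z')
  let ?q = "rot E p a b"
  have s: "(z,z') \<in> (PR ?q)\<^sup>+ \<or> (z' = a \<and> (z,b) \<in> (PR ?q)\<^sup>*)" using rot_step2[where p=p and a=a and b=b and E=E, OF pb ab] step.hyps(2) by simp
  from step.IH show ?case
  proof
    assume yz: "(y,z) \<in> (PR ?q)\<^sup>+"
    from s show ?thesis
    proof
      assume "(z,z') \<in> (PR ?q)\<^sup>+" then show ?thesis using trancl_trans[OF yz] by blast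
    next
      assume "z' = a \<and> (z,b) \<in> (PR ?q)\<^sup>*"
      then show ?thesis using yz by (meson trancl_into_rtrancl rtrancl_trans)
    qed
  next
    assume "z = a \<and> (y,b) \<in> (PR ?q)\<^sup>*"
    then have "?q b = Some z'" using step.hyps(2) rot_b by (metis PR_iff)
    then have "(b,z') \<in> PR ?q" by simp
    then have "(y,z') \<in> (PR ?q)\<^sup>+" using \<open>z = a \<and> (y,b) \<in> (PR ?q)\<^sup>*\<close> rtrancl_into_trancl1 by metis
    then show ?thesis by simp
  qed
qed

lemma rot_acyc:
  assumes pb: "p b = Some a" and ac: "\<forall>x. (x,x) \<notin> (PR p)\<^sup>+"
  shows "(x,x) \<notin> (PR (rot E p a b))\<^sup>+"
proof
  let ?q = "rot E p a b"
  have ab: "a \<noteq> b"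
  proof
    assume "a = b" then have "(b,b) \<in> PR p" using pb by simp
    then show False using ac by blast
  qed
  assume xx: "(x,x) \<in> (PR ?q)\<^sup>+"
  then have "x = b" using rot_anc1[where p=p and a=a and b=b and E=E, OF pb ab xx] ac by blast
  with xx have bb: "(b,b) \<in> (PR ?q)\<^sup>+" by simp
  then obtain z where qb: "?q b = Some z" by (cases rule: converse_tranclE) auto
  then have pa: "p a = Some z" using rot_b by metis
  have zb: "(z,b) \<in> (PR ?q)\<^sup>*" using tr_step_iff[of ?q b z b] qb bb by simp
  show False
  proof (cases "z = b")
    case True
    then have "(a,a) \<in> (PR p)\<^sup>+" using pa pb by (meson PR_iff trancl.simps)
    then show False using ac by blast
  next
    case False
    then have "(z,b) \<in> (PR ?q)\<^sup>+" using zb rt_neq_tr by metis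
    then have "(z,b) \<in> (PR p)\<^sup>+ \<or> (z,a) \<in> (PR p)\<^sup>*" using rot_anc1[where p=p and a=a and b=b and E=E, OF pb ab] by blast
    then have "(z,a) \<in> (PR p)\<^sup>*"
    proof
      assume "(z,b) \<in> (PR p)\<^sup>+"
      then show ?thesis using pb by (meson PR_iff trancl_into_rtrancl rtrancl_into_rtrancl)
    qed
    then have "(a,a) \<in> (PR p)\<^sup>+" using pa by (meson PR_iff rtrancl_into_trancl2)
    then show False using ac by blast
  qed
qed



lemma gt_LN:
  assumes g: "gt E S p" and sg: "sg E" and pc: "p c = Some w"
  shows "\<exists>s. (s,c) \<in> (PR p)\<^sup>* \<and> E w s"
proof -
  have wS: "w \<in> S" using gt_val[OF g pc] .
  define Dw where "Dw = {y. (y,w) \<in> (PR p)\<^sup>*}"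
  define Dc where "Dc = {y. (y,c) \<in> (PR p)\<^sup>*}"
  have cw: "(c,w) \<in> (PR p)\<^sup>*" using pc by auto
  have "connected_on E Dw" using gt_conn[OF g wS] unfolding Dw_def .
  moreover have "c \<in> Dw" "w \<in> Dw" using cw unfolding Dw_def by auto
  ultimately have r: "reach_in E Dw c w" unfolding connected_on_def by blast
  have cDc: "c \<in> Dc" unfolding Dc_def by simp
  have wDc: "w \<notin> Dc"
  proof
    assume "w \<in> Dc"
    then have "(w,c) \<in> (PR p)\<^sup>*" unfolding Dc_def by simp
    then have "(c,c) \<in> (PR p)\<^sup>+" using pc by (meson PR_iff rtrancl_into_trancl2)
    then show False using gt_acyc[OF g] by blast
  qed
  obtain s t where st: "s \<in> Dw \<inter> Dc" "t \<in> Dw - Dc" "E s t"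
    using reach_leave[OF r cDc wDc] by blast
  have sc: "(s,c) \<in> (PR p)\<^sup>*" using st unfolding Dc_def by simp
  have tw: "(t,w) \<in> (PR p)\<^sup>*" using st unfolding Dw_def by simp
  have tc: "(t,c) \<notin> (PR p)\<^sup>*" using st unfolding Dc_def by simp
  have DwS: "Dw \<subseteq> S" unfolding Dw_def using gt_D_sub[OF g wS] by blast
  have "(s,t) \<in> (PR p)\<^sup>+ \<or> (t,s) \<in> (PR p)\<^sup>+" using gt_edge[OF g] st DwS by blast
  then have "t = w"
  proof
    assume "(s,t) \<in> (PR p)\<^sup>+"
    then have "(s,t) \<in> (PR p)\<^sup>*" by simp
    from rt_comp[OF this sc] have "(c,t) \<in> (PR p)\<^sup>*" using tc by blast
    moreover have "c \<noteq> t" using tc by auto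
    ultimately have "(c,t) \<in> (PR p)\<^sup>+" by (rule rt_neq_tr)
    then have wt: "(w,t) \<in> (PR p)\<^sup>*" using tr_step_iff[of p c w t] pc by simp
    show "t = w"
    proof (rule ccontr)
      assume "t \<noteq> w"
      then have "(w,t) \<in> (PR p)\<^sup>+" using rt_neq_tr[OF wt] by simp
      then have "(w,w) \<in> (PR p)\<^sup>+" using tw by simp
      then show False using gt_acyc[OF g] by blast
    qed
  next
    assume "(t,s) \<in> (PR p)\<^sup>+"
    then have "(t,c) \<in> (PR p)\<^sup>*" using sc by simp
    then show "t = w" using tc by simp
  qed
  then have "E w s" using st sg unfolding sg_def by blast
  then show ?thesis using sc by blast
qed

lemma rot_F1:
  assumes pb: "p b = Some a" and ab: "a \<noteq> b" and w: "w \<noteq> a" "w \<noteq> b"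
  shows "(y,w) \<in> (PR (rot E p a b))\<^sup>* \<longleftrightarrow> (y,w) \<in> (PR p)\<^sup>*"
proof
  assume "(y,w) \<in> (PR (rot E p a b))\<^sup>*"
  then show "(y,w) \<in> (PR p)\<^sup>*"
  proof (cases "y = w")
    case False
    then have "(y,w) \<in> (PR (rot E p a b))\<^sup>+" using \<open>(y,w) \<in> _\<close> rt_neq_tr by metis
    then have "(y,w) \<in> (PR p)\<^sup>+ \<or> (w = b \<and> (y,a) \<in> (PR p)\<^sup>*)"
      by (rule rot_anc1[where p=p and a=a and b=b and E=E, OF pb ab])
    then show ?thesis using w by auto
  qed simp
next
  assume "(y,w) \<in> (PR p)\<^sup>*"
  then show "(y,w) \<in> (PR (rot E p a b))\<^sup>*"
  proof (cases "y = w")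
    case False
    then have "(y,w) \<in> (PR p)\<^sup>+" using \<open>(y,w) \<in> _\<close> rt_neq_tr by metis
    then have "(y,w) \<in> (PR (rot E p a b))\<^sup>+ \<or> (w = a \<and> (y,b) \<in> (PR (rot E p a b))\<^sup>*)"
      by (rule rot_anc2[where p=p and a=a and b=b and E=E, OF pb ab])
    then show ?thesis using w by auto
  qed simp
qed

lemma rot_F2:
  assumes pb: "p b = Some a" and ab: "a \<noteq> b"
  shows "(y,b) \<in> (PR (rot E p a b))\<^sup>* \<longleftrightarrow> (y,a) \<in> (PR p)\<^sup>*"
proof
  let ?q = "rot E p a b"
  assume yb: "(y,b) \<in> (PR ?q)\<^sup>*"
  show "(y,a) \<in> (PR p)\<^sup>*"
  proof (cases "y = b")
    case True then show ?thesis using pb by auto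
  next
    case False
    then have "(y,b) \<in> (PR ?q)\<^sup>+" using yb rt_neq_tr by metis
    then have "(y,b) \<in> (PR p)\<^sup>+ \<or> (y,a) \<in> (PR p)\<^sup>*" using rot_anc1[where p=p and a=a and b=b and E=E, OF pb ab] by blast
    then show ?thesis
    proof
      assume "(y,b) \<in> (PR p)\<^sup>+"
      then show ?thesis using pb by (meson PR_iff trancl_into_rtrancl rtrancl_into_rtrancl)
    qed
  qed
next
  let ?q = "rot E p a b"
  assume ya: "(y,a) \<in> (PR p)\<^sup>*"
  have qab: "(a,b) \<in> PR ?q" using rot_a[OF ab] by simp
  show "(y,b) \<in> (PR ?q)\<^sup>*"
  proof (cases "y = a")
    case True then show ?thesis using qab by auto
  next
    case False
    then have "(y,a) \<in> (PR p)\<^sup>+" using ya rt_neq_tr by metis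
    then have "(y,a) \<in> (PR ?q)\<^sup>+ \<or> (y,b) \<in> (PR ?q)\<^sup>*" using rot_anc2[where p=p and a=a and b=b and E=E, OF pb ab] by blast
    then show ?thesis
    proof
      assume "(y,a) \<in> (PR ?q)\<^sup>+"
      then show ?thesis using qab by (meson trancl_into_rtrancl rtrancl_into_rtrancl)
    qed
  qed
qed


lemma self_loop: "p x = Some x \<Longrightarrow> (x,x) \<in> (PR p)\<^sup>+"
  by (simp add: r_into_trancl')

lemma gt_rot:
  assumes g: "gt E S p" and sg: "sg E" and pb: "p b = Some a"
  shows "gt E S (rot E p a b)"
proof -
  define q where "q = rot E p a b"
  have ac: "\<forall>x. (x,x) \<notin> (PR p)\<^sup>+" using gt_acyc[OF g] by blast
  have ab: "a \<noteq> b"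
  proof
    assume "a = b" then have "(b,b) \<in> PR p" using pb by simp
    then show False using ac by blast
  qed
  have aS: "a \<in> S" using gt_val[OF g pb] .
  have bS: "b \<in> S" using gt_dom[OF g pb] .
  have F1: "(y,w) \<in> (PR q)\<^sup>* \<longleftrightarrow> (y,w) \<in> (PR p)\<^sup>*" if "w \<noteq> a" "w \<noteq> b" for y w
    unfolding q_def using rot_F1[where p=p and a=a and b=b and E=E, OF pb ab that] .
  have F2: "(y,b) \<in> (PR q)\<^sup>* \<longleftrightarrow> (y,a) \<in> (PR p)\<^sup>*" for y
    unfolding q_def using rot_F2[where p=p and a=a and b=b and E=E, OF pb ab] .
  have qa: "q a = Some b" unfolding q_def using rot_a[OF ab] .
  have qb: "q b = p a" unfolding q_def using rot_b .
  have T1: "\<forall>x. x \<notin> S \<longrightarrow> q x = None"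
  proof (intro allI impI)
    fix x assume x: "x \<notin> S"
    then have "x \<noteq> a" "x \<noteq> b" "p x = None" using aS bS gt_out[OF g] by auto
    then show "q x = None" unfolding q_def using rot_other[of x b a p E] by simp
  qed
  have T2: "\<forall>x y. q x = Some y \<longrightarrow> y \<in> S"
  proof (intro allI impI)
    fix x y assume "q x = Some y"
    then have "(x,y) \<in> (PR p)\<^sup>+ \<or> (y = b \<and> (x,a) \<in> (PR p)\<^sup>*)"
      unfolding q_def by (rule rot_step1[where p=p and a=a and b=b and E=E, OF pb ab])
    then show "y \<in> S" using gt_tr_dom[OF g] bS by blast
  qed
  have T3: "\<forall>x. (x,x) \<notin> (PR q)\<^sup>+" unfolding q_def using rot_acyc[OF pb ac] by blast
  have T4: "\<exists>r\<in>S. q r = None \<and> (\<forall>x\<in>S. (x,r) \<in> (PR q)\<^sup>*)"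
  proof (cases "p a = None")
    case True
    have "\<forall>x\<in>S. (x,b) \<in> (PR q)\<^sup>*" using F2 gt_root_unique[OF g aS True] by blast
    then show ?thesis using True qb bS by auto
  next
    case False
    obtain r where r: "r \<in> S" "p r = None" "\<forall>x\<in>S. (x,r) \<in> (PR p)\<^sup>*" using gt_root[OF g] by blast
    have "r \<noteq> a" "r \<noteq> b" using False r(2) pb by auto
    then have "q r = None" unfolding q_def using rot_other[of r b a p E] r(2) by simp
    moreover have "\<forall>x\<in>S. (x,r) \<in> (PR q)\<^sup>*" using F1[OF \<open>r \<noteq> a\<close> \<open>r \<noteq> b\<close>] r(3) by blast
    ultimately show ?thesis using r(1) by blast
  qed
  have down: "(x,a) \<in> (PR q)\<^sup>+" if xa: "(x,a) \<in> (PR p)\<^sup>+" and E: "E a x" and xb: "x \<noteq> b" for x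
  proof -
    obtain c where xc: "(x,c) \<in> (PR p)\<^sup>*" and "(c,a) \<in> PR p" using tranclD2[OF xa] by blast
    then have pc: "p c = Some a" by simp
    have ca: "c \<noteq> a" using pc ac self_loop by metis
    show ?thesis
    proof (cases "c = b")
      case False
      have "q c = Some a" unfolding q_def using rot_other[of c b a p E] False ca pc ab by simp
      moreover have "(x,c) \<in> (PR q)\<^sup>*" using F1[OF ca False] xc by simp
      ultimately show ?thesis using rtrancl_into_trancl1[of x c "PR q" a] by simp
    next
      case True
      then have "(x,b) \<in> (PR p)\<^sup>+" using xc xb rt_neq_tr by metis
      then obtain m where xm: "(x,m) \<in> (PR p)\<^sup>*" and "(m,b) \<in> PR p" using tranclD2 by metis
      then have pm: "p m = Some b" by simp
      have mb: "m \<noteq> b" using pm ac self_loop by metis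
      have ma: "m \<noteq> a"
      proof
        assume "m = a"
        then have "(a,b) \<in> PR p" "(b,a) \<in> PR p" using pm pb by auto
        then have "(a,a) \<in> (PR p)\<^sup>+" by (meson r_into_trancl trancl_into_trancl2)
        then show False using ac by blast
      qed
      have "q m = Some a" unfolding q_def using rot_child[of m b a p E] mb ma pm xm E by auto
      moreover have "(x,m) \<in> (PR q)\<^sup>*" using F1[OF ma mb] xm by simp
      ultimately show ?thesis using rtrancl_into_trancl1[of x m "PR q" a] by simp
    qed
  qed
  have T5a: "(x,y) \<in> (PR q)\<^sup>+ \<or> (y,x) \<in> (PR q)\<^sup>+" if xy: "(x,y) \<in> (PR p)\<^sup>+" and E: "E x y" for x y
  proof -
    have "(x,y) \<in> (PR q)\<^sup>+ \<or> (y = a \<and> (x,b) \<in> (PR q)\<^sup>*)"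
      unfolding q_def using rot_anc2[where p=p and a=a and b=b and E=E, OF pb ab xy] .
    then show ?thesis
    proof
      assume "y = a \<and> (x,b) \<in> (PR q)\<^sup>*"
      then have ya: "y = a" by simp
      show ?thesis
      proof (cases "x = b")
        case True then show ?thesis using qa ya by auto
      next
        case False
        have "E a x" using E ya sg unfolding sg_def by blast
        then show ?thesis using down[of x] xy ya False by blast
      qed
    qed simp
  qed
  have T5: "\<forall>x\<in>S. \<forall>y\<in>S. E x y \<longrightarrow> (x,y) \<in> (PR q)\<^sup>+ \<or> (y,x) \<in> (PR q)\<^sup>+"
  proof (intro ballI impI)
    fix x y assume xy: "x \<in> S" "y \<in> S" "E x y"
    then have "E y x" using sg unfolding sg_def by blast
    have "(x,y) \<in> (PR p)\<^sup>+ \<or> (y,x) \<in> (PR p)\<^sup>+" using gt_edge[OF g xy] .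
    then show "(x,y) \<in> (PR q)\<^sup>+ \<or> (y,x) \<in> (PR q)\<^sup>+"
    proof
      assume "(x,y) \<in> (PR p)\<^sup>+" then show ?thesis using T5a xy(3) by blast
    next
      assume "(y,x) \<in> (PR p)\<^sup>+" then show ?thesis using T5a \<open>E y x\<close> by blast
    qed
  qed
  have T6: "\<forall>w\<in>S. connected_on E {y. (y,w) \<in> (PR q)\<^sup>*}"
  proof
    fix w assume wS: "w \<in> S"
    consider "w = b" | "w = a" | "w \<noteq> a" "w \<noteq> b" by blast
    then show "connected_on E {y. (y,w) \<in> (PR q)\<^sup>*}"
    proof cases
      case 1
      then have "{y. (y,w) \<in> (PR q)\<^sup>*} = {y. (y,a) \<in> (PR p)\<^sup>*}" using F2 by auto
      then show ?thesis using gt_conn[OF g aS] by simp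
    next
      case 3
      then have "{y. (y,w) \<in> (PR q)\<^sup>*} = {y. (y,w) \<in> (PR p)\<^sup>*}" using F1 by auto
      then show ?thesis using gt_conn[OF g wS] by simp
    next
      case 2
      define Da where "Da = {y. (y,a) \<in> (PR q)\<^sup>*}"
      have aDa: "a \<in> Da" unfolding Da_def by simp
      have "connected_on E Da"
      proof (rule connected_onI[OF aDa _ sg])
        fix y assume "y \<in> Da"
        then have ya: "(y,a) \<in> (PR q)\<^sup>*" unfolding Da_def by simp
        show "reach_in E Da y a"
        proof (cases "y = a")
          case True then show ?thesis using reach_refl aDa by metis
        next
          case False
          then have "(y,a) \<in> (PR q)\<^sup>+" using ya rt_neq_tr by metis
          then obtain c where yc: "(y,c) \<in> (PR q)\<^sup>*" and "(c,a) \<in> PR q" using tranclD2 by metis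
          then have qc: "q c = Some a" by simp
          have cb: "c \<noteq> b"
          proof
            assume "c = b"
            then have "p a = Some a" using qc qb by simp
            then have "(a,a) \<in> (PR p)\<^sup>+" by auto
            then show False using ac by blast
          qed
          have ca: "c \<noteq> a" using qc qa ab by auto
          have Fc: "(z,c) \<in> (PR q)\<^sup>* \<longleftrightarrow> (z,c) \<in> (PR p)\<^sup>*" for z using F1[OF ca cb] .
          have "\<exists>s. (s,c) \<in> (PR p)\<^sup>* \<and> E a s"
          proof (cases "p c = Some b")
            case True
            then have "rot E p a b c = (if \<exists>y. (y,c) \<in> (PR p)\<^sup>* \<and> E a y then Some a else Some b)"
              using rot_child[of c b a p E] cb ca by simp
            then show ?thesis using qc ab unfolding q_def by (auto split: if_splits)
          next
            case False
            then have "p c = Some a" using qc rot_other[of c b a p E] cb ca unfolding q_def by simp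
            then show ?thesis using gt_LN[OF g sg] by blast
          qed
          then obtain s where sc: "(s,c) \<in> (PR p)\<^sup>*" and Eas: "E a s" by blast
          have cS: "c \<in> S" using T1 qc by (metis option.distinct(1))
          define Dc where "Dc = {z. (z,c) \<in> (PR p)\<^sup>*}"
          have "connected_on E Dc" using gt_conn[OF g cS] unfolding Dc_def .
          moreover have "y \<in> Dc" "s \<in> Dc" using yc Fc sc unfolding Dc_def by auto
          ultimately have "reach_in E Dc y s" unfolding connected_on_def by blast
          moreover have "Dc \<subseteq> Da"
          proof
            fix z assume "z \<in> Dc"
            then have "(z,c) \<in> (PR q)\<^sup>*" using Fc unfolding Dc_def by simp
            moreover have "(c,a) \<in> PR q" using qc by simp
            ultimately show "z \<in> Da" unfolding Da_def using rtrancl.rtrancl_into_rtrancl[of z c "PR q" a] by simp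
          qed
          ultimately have r1: "reach_in E Da y s" using reach_mono[of E Dc y s Da] by simp
          have "s \<in> Da" using \<open>s \<in> Dc\<close> \<open>Dc \<subseteq> Da\<close> by blast
          moreover have "E s a" using Eas sg unfolding sg_def by blast
          ultimately have "reach_in E Da s a" using reach_edge[of s Da a E] aDa by simp
          then show ?thesis using reach_trans[OF r1] by simp
        qed
      qed
      then show ?thesis using 2 Da_def by simp
    qed
  qed
  have "gt E S q" unfolding gt_def using T1 T2 T3 T4 T5 T6 by blast
  then show ?thesis unfolding q_def .
qed



lemma rot_order:
  assumes pb: "p b = Some a" and acp: "\<forall>x. (x,x) \<notin> (PR p)\<^sup>+"
    and cp: "(u,v) \<in> (PR p)\<^sup>+ \<or> (v,u) \<in> (PR p)\<^sup>+"
    and cq: "(u,v) \<in> (PR (rot E p a b))\<^sup>+ \<or> (v,u) \<in> (PR (rot E p a b))\<^sup>+"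
  shows "(anc p u v \<noteq> anc (rot E p a b) u v) \<longleftrightarrow> is_pair u v (a,b)"
proof -
  define q where "q = rot E p a b"
  have ab: "a \<noteq> b"
  proof
    assume "a = b" then have "(b,b) \<in> PR p" using pb by simp
    then show False using acp by blast
  qed
  have acq: "\<forall>x. (x,x) \<notin> (PR q)\<^sup>+" unfolding q_def using rot_acyc[OF pb acp] by blast
  have A1: "(y,z) \<in> (PR q)\<^sup>+ \<Longrightarrow> (y,z) \<in> (PR p)\<^sup>+ \<or> (z = b \<and> (y,a) \<in> (PR p)\<^sup>*)" for y z
    unfolding q_def by (rule rot_anc1[where p=p and a=a and b=b and E=E, OF pb ab])
  have A2: "(y,z) \<in> (PR p)\<^sup>+ \<Longrightarrow> (y,z) \<in> (PR q)\<^sup>+ \<or> (z = a \<and> (y,b) \<in> (PR q)\<^sup>*)" for y z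
    unfolding q_def by (rule rot_anc2[where p=p and a=a and b=b and E=E, OF pb ab])
  have pab: "(b,a) \<in> (PR p)\<^sup>+" using pb by auto
  have qba: "(a,b) \<in> (PR q)\<^sup>+" using rot_a[OF ab] unfolding q_def by auto
  have nc: "\<not> ((x,y) \<in> (PR r)\<^sup>+ \<and> (y,x) \<in> (PR r)\<^sup>+)" if "\<forall>x. (x,x) \<notin> (PR r)\<^sup>+" for x y r
    using that trancl_trans by metis
  have cq': "(u,v) \<in> (PR q)\<^sup>+ \<or> (v,u) \<in> (PR q)\<^sup>+" using cq q_def by simp
  show ?thesis
    unfolding q_def[symmetric] anc_PR is_pair_def
  proof
    assume d: "((v,u) \<in> (PR p)\<^sup>+) \<noteq> ((v,u) \<in> (PR q)\<^sup>+)"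
    show "(a,b) = (u,v) \<or> (a,b) = (v,u)"
    proof (cases "(v,u) \<in> (PR p)\<^sup>+")
      case True
      then have nq: "(v,u) \<notin> (PR q)\<^sup>+" using d by simp
      then have uvq: "(u,v) \<in> (PR q)\<^sup>+" using cq' by simp
      have "\<not> (u,v) \<in> (PR p)\<^sup>+" using nc[OF acp] True by blast
      then have "v = b" using A1[OF uvq] by blast
      moreover have "u = a" using A2[OF True] nq by blast
      ultimately show ?thesis by simp
    next
      case False
      then have vuq: "(v,u) \<in> (PR q)\<^sup>+" using d by simp
      have uvp: "(u,v) \<in> (PR p)\<^sup>+" using cp False by simp
      have "\<not> (u,v) \<in> (PR q)\<^sup>+" using nc[OF acq] vuq by blast
      then have "v = a" using A2[OF uvp] by blast
      moreover have "u = b" using A1[OF vuq] False by blast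
      ultimately show ?thesis by simp
    qed
  next
    assume "(a,b) = (u,v) \<or> (a,b) = (v,u)"
    then show "((v,u) \<in> (PR p)\<^sup>+) \<noteq> ((v,u) \<in> (PR q)\<^sup>+)"
    proof
      assume "(a,b) = (u,v)"
      then have "(v,u) \<in> (PR p)\<^sup>+" "(u,v) \<in> (PR q)\<^sup>+" using pab qba by auto
      then show ?thesis using nc[OF acq] by blast
    next
      assume "(a,b) = (v,u)"
      then have "(u,v) \<in> (PR p)\<^sup>+" "(v,u) \<in> (PR q)\<^sup>+" using pab qba by auto
      then show ?thesis using nc[OF acp] by blast
    qed
  qed
qed

lemma rot_seq_stree: "rot_seq V E p ps q \<Longrightarrow> stree E V p"
  by (cases ps) auto

lemma seq_parity:
  assumes fin: "finite V" and sg: "sg E" and uv: "u \<in> V" "v \<in> V" "E u v"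
  shows "rot_seq V E p ps q \<Longrightarrow> (anc p u v \<noteq> anc q u v) \<longleftrightarrow> odd (length (filter (is_pair u v) ps))"
proof (induction ps arbitrary: p)
  case Nil then show ?case by simp
next
  case (Cons ab ps)
  obtain a b where abd: "ab = (a,b)" by fastforce
  have sp: "stree E V p" "p b = Some a" and rs: "rot_seq V E (rot E p a b) ps q"
    using Cons.prems abd by auto
  have gp: "gt E V p" using stree_gt[OF sp(1) sg] .
  have gr: "gt E V (rot E p a b)" using gt_rot[OF gp sg sp(2)] .
  have "(anc p u v \<noteq> anc (rot E p a b) u v) \<longleftrightarrow> is_pair u v (a,b)"
    using rot_order[OF sp(2) _ gt_edge[OF gp uv] gt_edge[OF gr uv]] gt_acyc[OF gp] by blast
  moreover have "(anc (rot E p a b) u v \<noteq> anc q u v) \<longleftrightarrow> odd (length (filter (is_pair u v) ps))"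
    using Cons.IH[OF rs] .
  ultimately show ?case using abd by auto
qed

definition cnt :: "('b \<Rightarrow> 'b \<Rightarrow> bool) \<Rightarrow> 'b list \<Rightarrow> nat" where
  "cnt P xs = card {i. Suc i < length xs \<and> P (xs ! i) (xs ! Suc i)}"

lemma cnt_single: "cnt P [x] = 0" by (simp add: cnt_def)

lemma cnt_Cons2: "cnt P (x # y # zs) = (if P x y then 1 else 0) + cnt P (y # zs)"
proof -
  let ?A = "{i. Suc i < length (y # zs) \<and> P ((y # zs) ! i) ((y # zs) ! Suc i)}"
  have eq: "{i. Suc i < length (x # y # zs) \<and> P ((x # y # zs) ! i) ((x # y # zs) ! Suc i)}
      = {i::nat. i = 0 \<and> P x y} \<union> Suc ` ?A"
  proof (intro set_eqI iffI)
    fix i assume "i \<in> {i. Suc i < length (x # y # zs) \<and> P ((x # y # zs) ! i) ((x # y # zs) ! Suc i)}"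
    then show "i \<in> {i::nat. i = 0 \<and> P x y} \<union> Suc ` ?A" by (cases i) auto
  next
    fix i assume "i \<in> {i::nat. i = 0 \<and> P x y} \<union> Suc ` ?A"
    then show "i \<in> {i. Suc i < length (x # y # zs) \<and> P ((x # y # zs) ! i) ((x # y # zs) ! Suc i)}"
      by auto
  qed
  have fA: "finite ?A" by (rule finite_subset[of _ "{..<length (y # zs)}"]) auto
  have fB: "finite {i::nat. i = 0 \<and> P x y}" by (rule finite_subset[of _ "{0}"]) auto
  have fS: "finite (Suc ` ?A)" using fA by simp
  have dj: "{i::nat. i = 0 \<and> P x y} \<inter> Suc ` ?A = {}" by auto
  have "card ({i::nat. i = 0 \<and> P x y} \<union> Suc ` ?A) = card {i::nat. i = 0 \<and> P x y} + card (Suc ` ?A)"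
    using card_Un_disjoint[OF fB fS dj] .
  moreover have "card (Suc ` ?A) = card ?A" by (simp add: card_image)
  moreover have "card {i::nat. i = 0 \<and> P x y} = (if P x y then 1 else 0)" by auto
  ultimately show ?thesis unfolding cnt_def eq by simp
qed

lemma path_parity:
  assumes fin: "finite V" and sg: "sg E" and uv: "u \<in> V" "v \<in> V" "E u v"
  shows "xs \<noteq> [] \<Longrightarrow> stree E V (hd xs) \<Longrightarrow> (\<forall>i. Suc i < length xs \<longrightarrow> R_edge V E (xs ! i) (xs ! Suc i)) \<Longrightarrow>
     (anc (hd xs) u v \<noteq> anc (last xs) u v) \<longleftrightarrow> odd (cnt (uv_edge E u v) xs)"
proof (induction xs)
  case Nil then show ?case by simp
next
  case (Cons x ys)
  show ?case
  proof (cases ys)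
    case Nil then show ?thesis by (simp add: cnt_single)
  next
    case (Cons y zs)
    have e: "R_edge V E x y" using Cons.prems(3) \<open>ys = y # zs\<close> by force
    then have sx: "stree E V x" and sy: "stree E V y" unfolding R_edge_def by auto
    have rest: "\<forall>i. Suc i < length ys \<longrightarrow> R_edge V E (ys ! i) (ys ! Suc i)"
      using Cons.prems(3) by force
    have IH: "(anc y u v \<noteq> anc (last ys) u v) \<longleftrightarrow> odd (cnt (uv_edge E u v) ys)"
      using Cons.IH[OF _ _ rest] sy \<open>ys = y # zs\<close> by simp
    have gx: "gt E V x" using stree_gt[OF sx sg] .
    have gy: "gt E V y" using stree_gt[OF sy sg] .
    have step: "(anc x u v \<noteq> anc y u v) \<longleftrightarrow> uv_edge E u v x y"
    proof -
      obtain a b where rab: "is_rotation E x a b y \<or> is_rotation E y a b x" using e unfolding R_edge_def by blast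
      have key: "(anc p u v \<noteq> anc q u v) \<longleftrightarrow> is_pair u v (a,b)"
        if "is_rotation E p a b q" "gt E V p" "gt E V q" for p q a b
        using that rot_order[of p b a u v E] gt_edge[of E V p, OF _ uv] gt_edge[of E V q, OF _ uv]
          gt_acyc[of E V p] unfolding is_rotation_def by blast
      show ?thesis
      proof
        assume d: "anc x u v \<noteq> anc y u v"
        from rab have "is_pair u v (a,b)"
        proof
          assume "is_rotation E x a b y" then show ?thesis using key gx gy d by blast
        next
          assume "is_rotation E y a b x" then show ?thesis using key gx gy d by blast
        qed
        then show "uv_edge E u v x y" unfolding uv_edge_def using rab by blast
      next
        assume "uv_edge E u v x y"
        then obtain a' b' where "is_pair u v (a',b')" "is_rotation E x a' b' y \<or> is_rotation E y a' b' x"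
          unfolding uv_edge_def by blast
        then show "anc x u v \<noteq> anc y u v" using key gx gy by metis
      qed
    qed
    show ?thesis using IH step cnt_Cons2[of "uv_edge E u v" x y zs] \<open>ys = y # zs\<close> by auto
  qed
qed



lemma rot_seq_last: "rot_seq V E p ps q \<Longrightarrow> stree E V q"
  by (induction ps arbitrary: p) auto

lemma rot_seq_append: "rot_seq V E p xs m \<Longrightarrow> rot_seq V E m ys q \<Longrightarrow> rot_seq V E p (xs @ ys) q"
proof (induction xs arbitrary: p)
  case Nil then show ?case by simp
next
  case (Cons ab xs) then show ?case by (cases ab) auto
qed

definition good where "good T T' y \<longleftrightarrow> (\<forall>z. (y,z) \<in> (PR T')\<^sup>* \<longrightarrow> T z = T' z)"

lemma good_chain1: "good T T' y \<Longrightarrow> (y,z) \<in> (PR T')\<^sup>* \<Longrightarrow> (y,z) \<in> (PR T)\<^sup>*"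
proof -
  assume g: "good T T' y" and r: "(y,z) \<in> (PR T')\<^sup>*"
  from r show "(y,z) \<in> (PR T)\<^sup>*"
  proof (induction rule: rtrancl_induct)
    case (step z z')
    then have "T z = Some z'" using g unfolding good_def by auto
    then show ?case using step by (simp add: rtrancl_into_rtrancl)
  qed simp
qed

lemma good_chain2: "good T T' y \<Longrightarrow> (y,z) \<in> (PR T)\<^sup>* \<Longrightarrow> (y,z) \<in> (PR T')\<^sup>*"
proof -
  assume g: "good T T' y" and r: "(y,z) \<in> (PR T)\<^sup>*"
  from r show "(y,z) \<in> (PR T')\<^sup>*"
  proof (induction rule: rtrancl_induct)
    case (step z z')
    then have "T' z = Some z'" using g unfolding good_def by auto
    then show ?case using step by (simp add: rtrancl_into_rtrancl)
  qed simp
qed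

lemma good_up: "good T T' y \<Longrightarrow> (y,z) \<in> (PR T')\<^sup>* \<Longrightarrow> good T T' z"
  unfolding good_def by (meson rtrancl_trans)

lemma good_step: "T' x = Some w \<Longrightarrow> good T T' x \<longleftrightarrow> T x = T' x \<and> good T T' w"
proof
  assume tw: "T' x = Some w" and g: "good T T' x"
  have "(x,w) \<in> (PR T')\<^sup>*" using tw by auto
  then show "T x = T' x \<and> good T T' w" using g good_up[OF g] unfolding good_def by blast
next
  assume tw: "T' x = Some w" and h: "T x = T' x \<and> good T T' w"
  show "good T T' x" unfolding good_def
  proof (intro allI impI)
    fix z assume "(x,z) \<in> (PR T')\<^sup>*"
    then show "T z = T' z"
    proof (cases rule: converse_rtranclE)
      case base then show ?thesis using h by simp
    next
      case (step y)
      then have "y = w" using tw by simp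
      then show ?thesis using step h unfolding good_def by blast
    qed
  qed
qed

lemma good_root: "T' x = None \<Longrightarrow> good T T' x \<longleftrightarrow> T x = None"
proof
  assume "T' x = None" "good T T' x"
  then show "T x = None" unfolding good_def by auto
next
  assume n: "T' x = None" "T x = None"
  show "good T T' x" unfolding good_def
  proof (intro allI impI)
    fix z assume "(x,z) \<in> (PR T')\<^sup>*"
    then have "z = x" using root_rt[of T' x z] n by simp
    then show "T z = T' z" using n by simp
  qed
qed

lemma D_comp:
  assumes g: "gt E V p" and sg: "sg E" and w: "w \<in> V"
  shows "{y. (y,w) \<in> (PR p)\<^sup>*} = {y. reach_in E (V - {z. (w,z) \<in> (PR p)\<^sup>+}) w y}"
proof -
  define A where "A = {z. (w,z) \<in> (PR p)\<^sup>+}"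
  define D where "D = {y. (y,w) \<in> (PR p)\<^sup>*}"
  have DV: "D \<subseteq> V - A"
  proof
    fix y assume "y \<in> D"
    then have yw: "(y,w) \<in> (PR p)\<^sup>*" unfolding D_def by simp
    have "y \<in> V" using gt_D_sub[OF g w yw] .
    moreover have "y \<notin> A"
    proof
      assume "y \<in> A"
      then have "(w,y) \<in> (PR p)\<^sup>+" unfolding A_def by simp
      then have "(w,w) \<in> (PR p)\<^sup>+" using yw by simp
      then show False using gt_acyc[OF g] by blast
    qed
    ultimately show "y \<in> V - A" by simp
  qed
  have wD: "w \<in> D" unfolding D_def by simp
  have "D = {y. reach_in E (V - A) w y}"
  proof (intro set_eqI iffI)
    fix y assume "y \<in> D"
    have "connected_on E D" using gt_conn[OF g w] unfolding D_def .
    then have "reach_in E D w y" using wD \<open>y \<in> D\<close> unfolding connected_on_def by blast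
    then show "y \<in> {y. reach_in E (V - A) w y}" using reach_mono[of E D w y "V - A"] DV by simp
  next
    fix y assume "y \<in> {y. reach_in E (V - A) w y}"
    then have rr: "reach_in E (V - A) w y" by simp
    have "y \<in> D \<and> reach_in E ((V - A) \<inter> D) w y"
    proof (rule reach_closed[OF rr wD])
      fix a b assume ab: "a \<in> D" "b \<in> V - A" "a \<in> V - A" "E a b"
      then have aw: "(a,w) \<in> (PR p)\<^sup>*" unfolding D_def by simp
      have "(a,b) \<in> (PR p)\<^sup>+ \<or> (b,a) \<in> (PR p)\<^sup>+" using gt_edge[OF g] ab by blast
      then show "b \<in> D"
      proof
        assume "(a,b) \<in> (PR p)\<^sup>+"
        then have "(a,b) \<in> (PR p)\<^sup>*" by simp
        from rt_comp[OF this aw] show ?thesis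
        proof
          assume "(b,w) \<in> (PR p)\<^sup>*" then show ?thesis unfolding D_def by simp
        next
          assume wb: "(w,b) \<in> (PR p)\<^sup>*"
          show ?thesis
          proof (cases "w = b")
            case True then show ?thesis unfolding D_def by simp
          next
            case False
            then have "(w,b) \<in> (PR p)\<^sup>+" using rt_neq_tr[OF wb] by simp
            then show ?thesis using ab unfolding A_def by simp
          qed
        qed
      next
        assume "(b,a) \<in> (PR p)\<^sup>+"
        then have "(b,w) \<in> (PR p)\<^sup>*" using aw by simp
        then show ?thesis unfolding D_def by simp
      qed
    qed
    then show "y \<in> D" by simp
  qed
  then show ?thesis unfolding D_def A_def .
qed

lemma tr_iff_rt: "\<forall>x. (x,x) \<notin> (PR p)\<^sup>+ \<Longrightarrow> (a,z) \<in> (PR p)\<^sup>+ \<longleftrightarrow> (a,z) \<in> (PR p)\<^sup>* \<and> a \<noteq> z"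
  using rt_neq_tr by (metis trancl_into_rtrancl)

lemma good_D:
  assumes gT: "gt E V T" and gT': "gt E V T'" and sg: "sg E" and a: "a \<in> V" and ga: "good T T' a"
  shows "{y. (y,a) \<in> (PR T)\<^sup>*} = {y. (y,a) \<in> (PR T')\<^sup>*}"
proof -
  have "{z. (a,z) \<in> (PR T)\<^sup>+} = {z. (a,z) \<in> (PR T')\<^sup>+}"
    using tr_iff_rt[of T a] tr_iff_rt[of T' a] gt_acyc[OF gT] gt_acyc[OF gT']
      good_chain1[OF ga] good_chain2[OF ga] by blast
  then show ?thesis using D_comp[OF gT sg a] D_comp[OF gT' sg a] by simp
qed


lemma anc_set_finite: "gt E V p \<Longrightarrow> finite V \<Longrightarrow> finite {z. (x,z) \<in> (PR p)\<^sup>+}"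
  by (rule finite_subset[of _ V]) (auto dest: gt_tr_dom)

lemma climb:
  assumes fin: "finite V" and sg: "sg E" and gT': "gt E V T'" and x: "x \<in> V"
  shows "gt E V T \<Longrightarrow> (\<forall>z. (x,z) \<in> (PR T')\<^sup>+ \<longrightarrow> good T T' z) \<Longrightarrow>
    (case T' x of None \<Rightarrow> True | Some w \<Rightarrow> (x,w) \<in> (PR T)\<^sup>+) \<Longrightarrow>
    \<exists>ps T2. rot_seq V E T ps T2 \<and> T2 x = T' x \<and> (\<forall>y. good T T' y \<longrightarrow> good T2 T' y)"
proof (induction "card {z. (x,z) \<in> (PR T)\<^sup>+}" arbitrary: T rule: less_induct)
  case less
  note gT = less.prems(1) and ag = less.prems(2) and cnd = less.prems(3)
  show ?case
  proof (cases "T x = T' x")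
    case True
    have "rot_seq V E T [] T" using gt_stree[OF fin gT sg] by simp
    then show ?thesis using True by blast
  next
    case False
    have "T x \<noteq> None"
    proof
      assume "T x = None"
      then obtain w where "T' x = Some w" using False by (cases "T' x") auto
      then have "(x,w) \<in> (PR T)\<^sup>+" using cnd by simp
      then show False using \<open>T x = None\<close> by (cases rule: converse_tranclE) auto
    qed
    then obtain a where Ta: "T x = Some a" by blast
    define q where "q = rot E T a x"
    have acT: "\<forall>y. (y,y) \<notin> (PR T)\<^sup>+" using gt_acyc[OF gT] by blast
    have ax: "a \<noteq> x" using Ta acT self_loop by metis
    have gq: "gt E V q" unfolding q_def using gt_rot[OF gT sg Ta] .
    have acq: "\<forall>y. (y,y) \<notin> (PR q)\<^sup>+" using gt_acyc[OF gq] by blast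
    have qa: "q a = Some x" unfolding q_def using rot_a[OF ax] .
    have sub: "{z. (x,z) \<in> (PR q)\<^sup>+} \<subset> {z. (x,z) \<in> (PR T)\<^sup>+}"
    proof
      show "{z. (x,z) \<in> (PR q)\<^sup>+} \<subseteq> {z. (x,z) \<in> (PR T)\<^sup>+}"
      proof
        fix z assume "z \<in> {z. (x,z) \<in> (PR q)\<^sup>+}"
        then have xz: "(x,z) \<in> (PR q)\<^sup>+" by simp
        have "(x,z) \<in> (PR T)\<^sup>+ \<or> (z = x \<and> (x,a) \<in> (PR T)\<^sup>*)"
          using rot_anc1[where p=T and a=a and b=x and E=E, OF Ta ax] xz unfolding q_def by blast
        moreover have "z \<noteq> x" using xz acq by blast
        ultimately show "z \<in> {z. (x,z) \<in> (PR T)\<^sup>+}" by simp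
      qed
      have "(x,a) \<in> (PR T)\<^sup>+" using Ta by auto
      moreover have "(x,a) \<notin> (PR q)\<^sup>+"
      proof
        assume "(x,a) \<in> (PR q)\<^sup>+"
        moreover have "(a,x) \<in> (PR q)\<^sup>+" using qa by auto
        ultimately show False using acq trancl_trans by metis
      qed
      ultimately show "{z. (x,z) \<in> (PR q)\<^sup>+} \<noteq> {z. (x,z) \<in> (PR T)\<^sup>+}" by blast
    qed
    have lt: "card {z. (x,z) \<in> (PR q)\<^sup>+} < card {z. (x,z) \<in> (PR T)\<^sup>+}"
      using psubset_card_mono[OF anc_set_finite[OF gT fin] sub] .
    have xng: "\<not> good T T' x" using False unfolding good_def by blast
    have ang: "\<not> good T T' a"
    proof
      assume ga: "good T T' a"
      have aV: "a \<in> V" using gt_val[OF gT Ta] .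
      show False
      proof (cases "T' x")
        case None
        have "(a,x) \<in> (PR T')\<^sup>*" using gt_root_unique[OF gT' x None aV] .
        then show False using good_up[OF ga] xng by blast
      next
        case (Some w)
        have xwT: "(x,w) \<in> (PR T)\<^sup>+" using cnd Some by simp
        have "a \<noteq> w" using False Some Ta by simp
        have "(a,w) \<in> (PR T)\<^sup>*" using tr_step_iff[of T x a w] Ta xwT by simp
        then have awT: "(a,w) \<in> (PR T)\<^sup>+" using rt_neq_tr \<open>a \<noteq> w\<close> by metis
        have "x \<in> {y. (y,a) \<in> (PR T)\<^sup>*}" using Ta by auto
        then have "(x,a) \<in> (PR T')\<^sup>*" using good_D[OF gT gT' sg aV ga] by simp
        then have "(x,a) \<in> (PR T')\<^sup>+" using rt_neq_tr ax by metis
        then have "(w,a) \<in> (PR T')\<^sup>*" using tr_step_iff[of T' x w a] Some by simp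
        moreover have gw: "good T T' w" using ag Some r_into_trancl[of x w "PR T'"] by simp
        ultimately have "(w,a) \<in> (PR T)\<^sup>*" using good_chain1 by metis
        then have "(a,a) \<in> (PR T)\<^sup>+" using awT by simp
        then show False using acT by blast
      qed
    qed
    have pres: "good q T' y" if gy: "good T T' y" for y
      unfolding good_def
    proof (intro allI impI)
      fix z assume yz: "(y,z) \<in> (PR T')\<^sup>*"
      have gz: "good T T' z" using good_up[OF gy yz] .
      then have Tz: "T z = T' z" unfolding good_def by blast
      have "z \<noteq> x" using gz xng by blast
      moreover have "z \<noteq> a" using gz ang by blast
      moreover have "T z \<noteq> Some x"
      proof
        assume "T z = Some x"
        then have "T' z = Some x" using Tz by simp
        then have "(z,x) \<in> (PR T')\<^sup>*" by auto
        then show False using good_up[OF gz] xng by blast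
      qed
      ultimately have "q z = T z" unfolding q_def using rot_other[of z x a T E] by simp
      then show "q z = T' z" using Tz by simp
    qed
    have ag': "\<forall>z. (x,z) \<in> (PR T')\<^sup>+ \<longrightarrow> good q T' z" using ag pres by blast
    have cnd': "case T' x of None \<Rightarrow> True | Some w \<Rightarrow> (x,w) \<in> (PR q)\<^sup>+"
    proof (cases "T' x")
      case (Some w)
      have xwT: "(x,w) \<in> (PR T)\<^sup>+" using cnd Some by simp
      have "a \<noteq> w" using False Some Ta by simp
      have "(x,w) \<in> (PR q)\<^sup>+ \<or> (w = a \<and> (x,x) \<in> (PR q)\<^sup>*)"
        using rot_anc2[where p=T and a=a and b=x and E=E, OF Ta ax xwT] unfolding q_def .
      then show ?thesis using Some \<open>a \<noteq> w\<close> by simp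
    qed simp
    obtain ps T2 where r: "rot_seq V E q ps T2" "T2 x = T' x" "\<forall>y. good q T' y \<longrightarrow> good T2 T' y"
      using less.hyps[OF lt gq ag' cnd'] by blast
    have "rot_seq V E T ((a,x) # ps) T2"
      using r(1) gt_stree[OF fin gT sg] Ta unfolding q_def by simp
    then show ?thesis using r(2,3) pres by blast
  qed
qed

lemma connect:
  assumes fin: "finite V" and sg: "sg E" and gT': "gt E V T'"
  shows "gt E V T \<Longrightarrow> \<exists>ps. rot_seq V E T ps T'"
proof (induction "card V - card {y \<in> V. good T T' y}" arbitrary: T rule: less_induct)
  case less
  note gT = less.prems(1)
  show ?case
  proof (cases "\<forall>y\<in>V. good T T' y")
    case True
    have "T = T'"
    proof
      fix y show "T y = T' y"
      proof (cases "y \<in> V")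
        case True then show ?thesis using \<open>\<forall>y\<in>V. good T T' y\<close> unfolding good_def by blast
      next
        case False then show ?thesis using gt_out[OF gT] gt_out[OF gT'] by metis
      qed
    qed
    then have "rot_seq V E T [] T'" using gt_stree[OF fin gT sg] by simp
    then show ?thesis by blast
  next
    case False
    then obtain y where y: "y \<in> V" "\<not> good T T' y" by blast
    define Z where "Z = {z. (y,z) \<in> (PR T')\<^sup>* \<and> T z \<noteq> T' z}"
    define f where "f z = card {z'. (z,z') \<in> (PR T')\<^sup>+}" for z
    obtain z0 where "z0 \<in> Z" using y unfolding good_def Z_def by blast
    then obtain x where xZ: "x \<in> Z" and xmin: "\<forall>z. z \<in> Z \<longrightarrow> f x \<le> f z"
      using ex_has_least_nat[of "\<lambda>z. z \<in> Z" z0 f] by blast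
    have x: "x \<in> V" using xZ y gt_rt_closed[OF gT'] unfolding Z_def by blast
    have xng: "\<not> good T T' x" using xZ unfolding Z_def good_def by blast
    have ag: "\<forall>z. (x,z) \<in> (PR T')\<^sup>+ \<longrightarrow> good T T' z"
    proof (intro allI impI)
      fix z assume xz: "(x,z) \<in> (PR T')\<^sup>+"
      show "good T T' z" unfolding good_def
      proof (intro allI impI, rule ccontr)
        fix z' assume zz: "(z,z') \<in> (PR T')\<^sup>*" and ne: "T z' \<noteq> T' z'"
        have xz': "(x,z') \<in> (PR T')\<^sup>+" using xz zz by simp
        have "(y,x) \<in> (PR T')\<^sup>*" using xZ unfolding Z_def by simp
        then have "(y,z') \<in> (PR T')\<^sup>*" using trancl_into_rtrancl[OF xz'] by simp
        then have "z' \<in> Z" using ne unfolding Z_def by simp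
        then have le: "f x \<le> f z'" using xmin by blast
        have "{w. (z',w) \<in> (PR T')\<^sup>+} \<subset> {w. (x,w) \<in> (PR T')\<^sup>+}"
        proof
          show "{w. (z',w) \<in> (PR T')\<^sup>+} \<subseteq> {w. (x,w) \<in> (PR T')\<^sup>+}" using xz' by auto
          have "z' \<notin> {w. (z',w) \<in> (PR T')\<^sup>+}" using gt_acyc[OF gT'] by blast
          then show "{w. (z',w) \<in> (PR T')\<^sup>+} \<noteq> {w. (x,w) \<in> (PR T')\<^sup>+}" using xz' by blast
        qed
        then have "f z' < f x" unfolding f_def using psubset_card_mono[OF anc_set_finite[OF gT' fin]] by blast
        then show False using le by simp
      qed
    qed
    have cnd: "case T' x of None \<Rightarrow> True | Some w \<Rightarrow> (x,w) \<in> (PR T)\<^sup>+"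
    proof (cases "T' x")
      case (Some w)
      have gw: "good T T' w" using ag Some r_into_trancl[of x w "PR T'"] by simp
      have wV: "w \<in> V" using gt_val[OF gT' Some] .
      have "x \<in> {y. (y,w) \<in> (PR T')\<^sup>*}" using Some by auto
      then have "x \<in> {y. (y,w) \<in> (PR T)\<^sup>*}" using good_D[OF gT gT' sg wV gw] by simp
      then have "(x,w) \<in> (PR T)\<^sup>*" by simp
      moreover have "x \<noteq> w" using Some gt_acyc[OF gT'] self_loop by metis
      ultimately show ?thesis using Some rt_neq_tr by simp
    qed simp
    obtain ps T2 where r: "rot_seq V E T ps T2" "T2 x = T' x" "\<forall>y. good T T' y \<longrightarrow> good T2 T' y"
      using climb[OF fin sg gT' x gT ag cnd] by blast
    have gT2: "gt E V T2" using stree_gt[OF rot_seq_last[OF r(1)] sg] .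
    have xg: "good T2 T' x"
    proof (cases "T' x")
      case None then show ?thesis using good_root r(2) by metis
    next
      case (Some w)
      have "good T T' w" using ag Some r_into_trancl[of x w "PR T'"] by simp
      then have "good T2 T' w" using r(3) by blast
      then show ?thesis using good_step[of T' x w T2, OF Some] r(2) by blast
    qed
    have "{y \<in> V. good T T' y} \<subset> {y \<in> V. good T2 T' y}"
      using r(3) xg xng x by blast
    then have "card {y \<in> V. good T T' y} < card {y \<in> V. good T2 T' y}"
      by (rule psubset_card_mono[rotated]) (use fin in simp)
    moreover have "card {y \<in> V. good T2 T' y} \<le> card V" using fin by (simp add: card_mono)
    ultimately have "card V - card {y \<in> V. good T2 T' y} < card V - card {y \<in> V. good T T' y}" by linarith
    then obtain ps2 where "rot_seq V E T2 ps2 T'" using less.hyps gT2 by blast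
    then show ?thesis using rot_seq_append[OF r(1)] by blast
  qed
qed



definition sw :: "'a \<Rightarrow> 'a \<Rightarrow> 'a \<Rightarrow> 'a" where
  "sw u v x = (if x = u then v else if x = v then u else x)"

definition cj :: "('a \<Rightarrow> 'a) \<Rightarrow> ('a \<Rightarrow> 'a option) \<Rightarrow> ('a \<Rightarrow> 'a option)" where
  "cj s p = (\<lambda>x. map_option s (p (s x)))"

lemma sw_inv[simp]: "sw u v (sw u v x) = x" by (simp add: sw_def)
lemma sw_sym: "sw u v = sw v u" by (rule ext) (simp add: sw_def)

lemma cj_inv: "(\<And>x. s (s x) = x) \<Longrightarrow> cj s (cj s p) = p"
  by (rule ext) (simp add: cj_def option.map_comp comp_def option.map_ident)

lemma cj_tr1: "(\<And>x. s (s x) = x) \<Longrightarrow> (x,y) \<in> (PR p)\<^sup>+ \<Longrightarrow> (s x, s y) \<in> (PR (cj s p))\<^sup>+"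
proof -
  assume inv: "\<And>x. s (s x) = x" and r: "(x,y) \<in> (PR p)\<^sup>+"
  from r show ?thesis
  proof (induction rule: trancl_induct)
    case (base y) then show ?case using inv by (simp add: cj_def r_into_trancl')
  next
    case (step y z)
    then have "(s y, s z) \<in> PR (cj s p)" using inv by (simp add: cj_def)
    then show ?case using step.IH trancl_into_trancl[of "s x" "s y" "PR (cj s p)" "s z"] by simp
  qed
qed

lemma cj_tr: "(\<And>x. s (s x) = x) \<Longrightarrow> (x,y) \<in> (PR (cj s p))\<^sup>+ \<longleftrightarrow> (s x, s y) \<in> (PR p)\<^sup>+"
proof
  assume inv: "\<And>x. s (s x) = x" and "(x,y) \<in> (PR (cj s p))\<^sup>+"
  then have "(s x, s y) \<in> (PR (cj s (cj s p)))\<^sup>+" using cj_tr1[of s x y "cj s p"] by blast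
  then show "(s x, s y) \<in> (PR p)\<^sup>+" using cj_inv[of s p] inv by simp
next
  assume inv: "\<And>x. s (s x) = x" and "(s x, s y) \<in> (PR p)\<^sup>+"
  then show "(x,y) \<in> (PR (cj s p))\<^sup>+" using cj_tr1[of s "s x" "s y" p] inv by simp
qed

lemma cj_rt: "(\<And>x. s (s x) = x) \<Longrightarrow> (x,y) \<in> (PR (cj s p))\<^sup>* \<longleftrightarrow> (s x, s y) \<in> (PR p)\<^sup>*"
proof -
  assume inv: "\<And>x. s (s x) = x"
  then have "x = y \<longleftrightarrow> s x = s y" by metis
  then show ?thesis using cj_tr[of s x y p, OF inv] by (simp add: rtrancl_eq_or_trancl)
qed

lemma reach_img:
  assumes inv: "\<And>x. s (s x) = x" and aut: "\<And>x y. E (s x) (s y) = E x y"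
    and r: "reach_in E X x y"
  shows "reach_in E (s ` X) (s x) (s y)"
proof -
  have "x \<in> X" "(x,y) \<in> (ER E X)\<^sup>*" using r by (simp_all add: reach_ER)
  from this(2) have "(s x, s y) \<in> (ER E (s ` X))\<^sup>*"
  proof (induction rule: rtrancl_induct)
    case (step y z)
    then have "(s y, s z) \<in> ER E (s ` X)" using aut unfolding ER_def by auto
    then show ?case using step.IH rtrancl_into_rtrancl[of "s x" "s y" "ER E (s ` X)" "s z"] by simp
  qed simp
  then show ?thesis using \<open>x \<in> X\<close> by (simp add: reach_ER)
qed

lemma conn_img:
  assumes inv: "\<And>x. s (s x) = x" and aut: "\<And>x y. E (s x) (s y) = E x y"
    and c: "connected_on E X"
  shows "connected_on E (s ` X)"
  unfolding connected_on_def
proof (intro conjI ballI)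
  show "s ` X \<noteq> {}" using c unfolding connected_on_def by simp
  fix x y assume "x \<in> s ` X" "y \<in> s ` X"
  then obtain x' y' where "x' \<in> X" "y' \<in> X" "x = s x'" "y = s y'" by blast
  then show "reach_in E (s ` X) x y" using reach_img[of s E, OF inv aut] c unfolding connected_on_def by blast
qed

lemma gt_cj:
  assumes g: "gt E V p" and inv: "\<And>x. s (s x) = x" and aut: "\<And>x y. E (s x) (s y) = E x y"
    and sV: "\<And>x. s x \<in> V \<longleftrightarrow> x \<in> V"
  shows "gt E V (cj s p)"
proof -
  let ?q = "cj s p"
  have T1: "\<forall>x. x \<notin> V \<longrightarrow> ?q x = None" using gt_out[OF g] sV by (simp add: cj_def)
  have T2: "\<forall>x y. ?q x = Some y \<longrightarrow> y \<in> V" using gt_val[OF g] sV by (auto simp: cj_def)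
  have T3: "\<forall>x. (x,x) \<notin> (PR ?q)\<^sup>+" using gt_acyc[OF g] cj_tr[OF inv] by blast
  have T4: "\<exists>r\<in>V. ?q r = None \<and> (\<forall>x\<in>V. (x,r) \<in> (PR ?q)\<^sup>*)"
  proof -
    obtain r where r: "r \<in> V" "p r = None" "\<forall>x\<in>V. (x,r) \<in> (PR p)\<^sup>*" using gt_root[OF g] by blast
    have "s r \<in> V" using sV r by simp
    moreover have "?q (s r) = None" using r inv by (simp add: cj_def)
    moreover have "\<forall>x\<in>V. (x, s r) \<in> (PR ?q)\<^sup>*" using r sV cj_rt[OF inv] inv by simp
    ultimately show ?thesis by blast
  qed
  have T5: "\<forall>x\<in>V. \<forall>y\<in>V. E x y \<longrightarrow> (x,y) \<in> (PR ?q)\<^sup>+ \<or> (y,x) \<in> (PR ?q)\<^sup>+"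
  proof (intro ballI impI)
    fix x y assume "x \<in> V" "y \<in> V" "E x y"
    then have "s x \<in> V" "s y \<in> V" "E (s x) (s y)" using sV aut by auto
    then show "(x,y) \<in> (PR ?q)\<^sup>+ \<or> (y,x) \<in> (PR ?q)\<^sup>+" using gt_edge[OF g] cj_tr[OF inv] by blast
  qed
  have T6: "\<forall>w\<in>V. connected_on E {y. (y,w) \<in> (PR ?q)\<^sup>*}"
  proof
    fix w assume "w \<in> V"
    then have "connected_on E {y. (y, s w) \<in> (PR p)\<^sup>*}" using gt_conn[OF g] sV by simp
    then have c: "connected_on E (s ` {y. (y, s w) \<in> (PR p)\<^sup>*})" by (rule conn_img[of s E, OF inv aut])
    have "s ` {y. (y, s w) \<in> (PR p)\<^sup>*} = {y. (y,w) \<in> (PR ?q)\<^sup>*}"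
    proof (intro set_eqI iffI)
      fix y assume "y \<in> s ` {y. (y, s w) \<in> (PR p)\<^sup>*}"
      then show "y \<in> {y. (y,w) \<in> (PR ?q)\<^sup>*}" using cj_rt[OF inv] inv by auto
    next
      fix y assume "y \<in> {y. (y,w) \<in> (PR ?q)\<^sup>*}"
      then have "s y \<in> {y. (y, s w) \<in> (PR p)\<^sup>*}" using cj_rt[OF inv] by simp
      then have "s (s y) \<in> s ` {y. (y, s w) \<in> (PR p)\<^sup>*}" by blast
      then show "y \<in> s ` {y. (y, s w) \<in> (PR p)\<^sup>*}" using inv by simp
    qed
    then show "connected_on E {y. (y,w) \<in> (PR ?q)\<^sup>*}" using c by simp
  qed
  show ?thesis unfolding gt_def using T1 T2 T3 T4 T5 T6 by blast
qed

lemma rot_cj: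
  assumes inv: "\<And>x. s (s x) = x" and aut: "\<And>x y. E (s x) (s y) = E x y"
  shows "rot E (cj s p) (s a) (s b) = cj s (rot E p a b)"
proof
  fix z
  have si: "s x = s y \<longleftrightarrow> x = y" for x y using inv by metis
  have ex: "(\<exists>y. in_subtree (cj s p) z y \<and> E (s a) y) \<longleftrightarrow> (\<exists>y. in_subtree p (s z) y \<and> E a y)"
  proof
    assume "\<exists>y. in_subtree (cj s p) z y \<and> E (s a) y"
    then obtain y where "(y,z) \<in> (PR (cj s p))\<^sup>*" "E (s a) y" unfolding ins_PR by blast
    then have "(s y, s z) \<in> (PR p)\<^sup>*" "E a (s y)" using cj_rt[OF inv] aut[of a "s y"] inv by auto
    then show "\<exists>y. in_subtree p (s z) y \<and> E a y" unfolding ins_PR by blast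
  next
    assume "\<exists>y. in_subtree p (s z) y \<and> E a y"
    then obtain y where "(y, s z) \<in> (PR p)\<^sup>*" "E a y" unfolding ins_PR by blast
    then have "(s y, z) \<in> (PR (cj s p))\<^sup>*" "E (s a) (s y)" using cj_rt[OF inv] aut inv by auto
    then show "\<exists>y. in_subtree (cj s p) z y \<and> E (s a) y" unfolding ins_PR by blast
  qed
  have cjz: "cj s p z = Some (s b) \<longleftrightarrow> p (s z) = Some b"
    unfolding cj_def using si by (cases "p (s z)") auto
  show "rot E (cj s p) (s a) (s b) z = cj s (rot E p a b) z"
    unfolding rot_def cj_def using ex cjz inv si by (auto simp: cj_def)
qed



definition twins :: "('a \<Rightarrow> 'a \<Rightarrow> bool) \<Rightarrow> 'a \<Rightarrow> 'a \<Rightarrow> bool" where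
  "twins E u v \<longleftrightarrow> u \<noteq> v \<and> E u v \<and> (\<forall>x. x \<noteq> u \<longrightarrow> x \<noteq> v \<longrightarrow> (E u x \<longleftrightarrow> E v x))"

lemma twins_sym: "sg E \<Longrightarrow> twins E u v \<Longrightarrow> twins E v u"
  unfolding twins_def sg_def by metis

lemma sw_aut:
  assumes sg: "sg E" and tw: "twins E u v"
  shows "E (sw u v x) (sw u v y) = E x y"
proof -
  have sym: "E a b \<longleftrightarrow> E b a" for a b using sg unfolding sg_def by blast
  have irr: "\<not> E a a" for a using sg unfolding sg_def by blast
  have uv: "u \<noteq> v" "E u v" and t: "\<And>x. x \<noteq> u \<Longrightarrow> x \<noteq> v \<Longrightarrow> E u x \<longleftrightarrow> E v x"
    using tw unfolding twins_def by auto
  show ?thesis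
    unfolding sw_def using uv t sym irr by (cases "x = u"; cases "x = v"; cases "y = u"; cases "y = v") auto
qed

lemma twin_rot:
  assumes g: "gt E S p" and sg: "sg E" and pb: "p b = Some a" and tw: "twins E a b"
  shows "rot E p a b = cj (sw a b) p"
proof -
  have ac: "\<forall>x. (x,x) \<notin> (PR p)\<^sup>+" using gt_acyc[OF g] by blast
  have ab: "a \<noteq> b" and t: "\<And>x. x \<noteq> a \<Longrightarrow> x \<noteq> b \<Longrightarrow> E a x \<longleftrightarrow> E b x"
    using tw unfolding twins_def by auto
  have sym: "E x y \<Longrightarrow> E y x" for x y using sg unfolding sg_def by blast
  have cyc: False if "(x,x) \<in> (PR p)\<^sup>+" for x using ac that by blast
  have pa_a: "p a \<noteq> Some a" using ac self_loop by metis
  have pa_b: "p a \<noteq> Some b"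
  proof
    assume "p a = Some b"
    then have "(a,b) \<in> PR p" "(b,a) \<in> PR p" using pb by auto
    then show False using cyc[of a] by (meson r_into_trancl trancl_into_trancl2)
  qed
  have only: "c = b" if pc: "p c = Some a" for c
  proof (rule ccontr)
    assume cb: "c \<noteq> b"
    obtain s where sc: "(s,c) \<in> (PR p)\<^sup>*" and Eas: "E a s" using gt_LN[OF g sg pc] by blast
    have ca: "(c,a) \<in> (PR p)\<^sup>+" using pc by auto
    have ba: "(b,a) \<in> (PR p)\<^sup>+" using pb by auto
    have sa: "s \<noteq> a"
    proof
      assume "s = a" then have "(a,a) \<in> (PR p)\<^sup>+" using sc ca by simp
      then show False using cyc by blast
    qed
    have bc_no: "(b,c) \<notin> (PR p)\<^sup>*"
    proof
      assume "(b,c) \<in> (PR p)\<^sup>*"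
      then have "(b,c) \<in> (PR p)\<^sup>+" using cb rt_neq_tr by metis
      then have "(a,c) \<in> (PR p)\<^sup>*" using tr_step_iff[of p b a c] pb by simp
      then have "(a,a) \<in> (PR p)\<^sup>+" using ca by simp
      then show False using cyc by blast
    qed
    have sb: "s \<noteq> b" using sc bc_no by blast
    have Ebs: "E b s" using t[OF sa sb] Eas by simp
    have bS: "b \<in> S" using gt_dom[OF g pb] .
    have cS: "c \<in> S" using gt_dom[OF g pc] .
    have sS: "s \<in> S" using gt_D_sub[OF g cS sc] .
    have "(b,s) \<in> (PR p)\<^sup>+ \<or> (s,b) \<in> (PR p)\<^sup>+" using gt_edge[OF g bS sS Ebs] .
    then show False
    proof
      assume "(b,s) \<in> (PR p)\<^sup>+"
      then have "(a,s) \<in> (PR p)\<^sup>*" using tr_step_iff[of p b a s] pb by simp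
      then have "(a,a) \<in> (PR p)\<^sup>+" using sc ca by (meson rtrancl_trans rtrancl_trancl_trancl)
      then show False using cyc by blast
    next
      assume "(s,b) \<in> (PR p)\<^sup>+"
      then have "(s,b) \<in> (PR p)\<^sup>*" by simp
      from rt_comp[OF this sc] show False
      proof
        assume "(b,c) \<in> (PR p)\<^sup>*" then show False using bc_no by simp
      next
        assume "(c,b) \<in> (PR p)\<^sup>*"
        then have "(c,b) \<in> (PR p)\<^sup>+" using cb rt_neq_tr by metis
        then have "(a,b) \<in> (PR p)\<^sup>*" using tr_step_iff[of p c a b] pc by simp
        then have "(a,a) \<in> (PR p)\<^sup>+" using ba by simp
        then show False using cyc by blast
      qed
    qed
  qed
  have moved: "\<exists>y. (y,x) \<in> (PR p)\<^sup>* \<and> E a y" if px: "p x = Some b" for x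
  proof -
    obtain s where sx: "(s,x) \<in> (PR p)\<^sup>*" and Ebs: "E b s" using gt_LN[OF g sg px] by blast
    have xb: "(x,b) \<in> (PR p)\<^sup>+" using px by auto
    have "s \<noteq> b"
    proof
      assume "s = b" then have "(b,b) \<in> (PR p)\<^sup>+" using sx xb by simp
      then show False using cyc by blast
    qed
    moreover have "s \<noteq> a"
    proof
      assume "s = a"
      then have "(a,b) \<in> (PR p)\<^sup>+" using sx xb by simp
      then have "(a,a) \<in> (PR p)\<^sup>+" using pb by (meson PR_iff trancl.trancl_into_trancl)
      then show False using cyc by blast
    qed
    ultimately have "E a s" using t Ebs by simp
    then show ?thesis using sx by blast
  qed
  show ?thesis
  proof
    fix z
    consider "z = b" | "z = a" | "z \<noteq> b" "z \<noteq> a" "p z = Some b" | "z \<noteq> b" "z \<noteq> a" "p z \<noteq> Some b"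
      by blast
    then show "rot E p a b z = cj (sw a b) p z"
    proof cases
      case 1
      then show ?thesis using pa_a pa_b ab rot_b[of E p a b]
        by (cases "p a") (auto simp: cj_def sw_def)
    next
      case 2
      then show ?thesis using ab pb rot_a[OF ab, of E p] by (simp add: cj_def sw_def)
    next
      case 3
      then have "rot E p a b z = Some a" using rot_child[of z b a p E] moved by simp
      then show ?thesis using 3 ab by (simp add: cj_def sw_def)
    next
      case 4
      then have r: "rot E p a b z = p z" using rot_other by metis
      have "p z \<noteq> Some a" using only 4 by blast
      then show ?thesis using r 4 by (cases "p z") (auto simp: cj_def sw_def)
    qed
  qed
qed


lemma succ_nth: "(\<forall>i. Suc i < length xs \<longrightarrow> P (xs ! i) (xs ! Suc i)) \<longleftrightarrow> successively P xs"
proof (induction xs)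
  case (Cons x ys)
  show ?case
  proof (cases ys)
    case Nil then show ?thesis by simp
  next
    case (Cons y zs)
    have "(\<forall>i. Suc i < length (x # ys) \<longrightarrow> P ((x # ys) ! i) ((x # ys) ! Suc i)) \<longleftrightarrow>
          P x y \<and> (\<forall>i. Suc i < length ys \<longrightarrow> P (ys ! i) (ys ! Suc i))"
    proof
      assume h: "\<forall>i. Suc i < length (x # ys) \<longrightarrow> P ((x # ys) ! i) ((x # ys) ! Suc i)"
      have "P x y" using h[rule_format, of 0] Cons by simp
      moreover have "\<forall>i. Suc i < length ys \<longrightarrow> P (ys ! i) (ys ! Suc i)"
        using h by (metis Suc_less_eq length_Cons nth_Cons_Suc)
      ultimately show "P x y \<and> (\<forall>i. Suc i < length ys \<longrightarrow> P (ys ! i) (ys ! Suc i))" by simp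
    next
      assume h: "P x y \<and> (\<forall>i. Suc i < length ys \<longrightarrow> P (ys ! i) (ys ! Suc i))"
      show "\<forall>i. Suc i < length (x # ys) \<longrightarrow> P ((x # ys) ! i) ((x # ys) ! Suc i)"
      proof (intro allI impI)
        fix i assume "Suc i < length (x # ys)"
        then show "P ((x # ys) ! i) ((x # ys) ! Suc i)" using h Cons by (cases i) auto
      qed
    qed
    then show ?thesis using Cons.IH Cons by simp
  qed
qed simp

lemma cnt_nil: "cnt P [] = 0" by (simp add: cnt_def)

locale twin_ctx =
  fixes V :: "'a set" and E :: "'a \<Rightarrow> 'a \<Rightarrow> bool" and u v :: 'a
  assumes fin: "finite V" and sg: "sg E" and tw: "twins E u v" and uV: "u \<in> V" and vV: "v \<in> V"
begin

abbreviation "\<sigma> \<equiv> sw u v"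

lemma inv: "\<sigma> (\<sigma> x) = x" by simp
lemma aut: "E (\<sigma> x) (\<sigma> y) = E x y" using sw_aut[OF sg tw] .
lemma sV: "\<sigma> x \<in> V \<longleftrightarrow> x \<in> V" using uV vV by (auto simp: sw_def)

lemma stree_cj: "stree E V p \<Longrightarrow> stree E V (cj \<sigma> p)"
  using stree_iff_gt[OF fin sg] gt_cj[of E V p \<sigma>, OF _ _ aut sV] by simp

lemma edge_uv:
  assumes e: "R_edge V E x y" and uve: "uv_edge E u v x y"
  shows "y = cj \<sigma> x"
proof -
  obtain a b where ab: "is_pair u v (a,b)" and r: "is_rotation E x a b y \<or> is_rotation E y a b x"
    using uve unfolding uv_edge_def by blast
  have twab: "twins E a b" and swab: "sw a b = \<sigma>"
    using ab tw twins_sym[OF sg tw] sw_sym[of u v] unfolding is_pair_def by auto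
  have gx: "gt E V x" and gy: "gt E V y" using e stree_gt[OF _ sg] unfolding R_edge_def by auto
  from r show ?thesis
  proof
    assume "is_rotation E x a b y"
    then have "x b = Some a" "y = rot E x a b" unfolding is_rotation_def by auto
    then show ?thesis using twin_rot[OF gx sg _ twab] swab by simp
  next
    assume "is_rotation E y a b x"
    then have "y b = Some a" "x = rot E y a b" unfolding is_rotation_def by auto
    then have "x = cj \<sigma> y" using twin_rot[OF gy sg _ twab] swab by simp
    then show ?thesis using cj_inv[of \<sigma> y] by simp
  qed
qed

lemma rotation_cj: "is_rotation E x a b y \<Longrightarrow> is_rotation E (cj \<sigma> x) (\<sigma> a) (\<sigma> b) (cj \<sigma> y)"
  unfolding is_rotation_def using rot_cj[of \<sigma> E x a b, OF _ aut] by (simp add: cj_def)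

lemma edge_cj: "R_edge V E x y \<Longrightarrow> R_edge V E (cj \<sigma> x) (cj \<sigma> y)"
  unfolding R_edge_def using stree_cj rotation_cj by blast

lemma succ_cj: "successively (R_edge V E) xs \<Longrightarrow> successively (R_edge V E) (map (cj \<sigma>) xs)"
  unfolding successively_map
  using successively_mono[of "R_edge V E" xs "\<lambda>x y. R_edge V E (cj \<sigma> x) (cj \<sigma> y)"] edge_cj by blast

lemma shortL:
  "successively (R_edge V E) (y # zs) \<Longrightarrow> cnt (uv_edge E u v) (y # zs) \<ge> 1 \<Longrightarrow>
   \<exists>ws. successively (R_edge V E) (cj \<sigma> y # ws) \<and> last (cj \<sigma> y # ws) = last (y # zs) \<and> length ws + 1 = length zs"
proof (induction zs arbitrary: y)
  case Nil then show ?case by (simp add: cnt_single)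
next
  case (Cons z zs)
  have e: "R_edge V E y z" and sz: "successively (R_edge V E) (z # zs)" using Cons.prems(1) by auto
  show ?case
  proof (cases "uv_edge E u v y z")
    case True
    then have "z = cj \<sigma> y" using edge_uv[OF e] by simp
    then show ?thesis using sz by (intro exI[of _ zs]) (cases zs, auto)
  next
    case False
    then have "cnt (uv_edge E u v) (z # zs) \<ge> 1" using Cons.prems(2) cnt_Cons2[of "uv_edge E u v" y z zs] by simp
    then obtain ws where ws: "successively (R_edge V E) (cj \<sigma> z # ws)" "last (cj \<sigma> z # ws) = last (z # zs)"
      "length ws + 1 = length zs" using Cons.IH[OF sz] by blast
    have "R_edge V E (cj \<sigma> y) (cj \<sigma> z)" using edge_cj[OF e] .
    then have "successively (R_edge V E) (cj \<sigma> y # cj \<sigma> z # ws)" using ws(1) by simp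
    then show ?thesis using ws(2,3) by (intro exI[of _ "cj \<sigma> z # ws"]) auto
  qed
qed

lemma shortM:
  "successively (R_edge V E) xs \<Longrightarrow> cnt (uv_edge E u v) xs \<ge> 2 \<Longrightarrow>
   \<exists>ys. ys \<noteq> [] \<and> successively (R_edge V E) ys \<and> hd ys = hd xs \<and> last ys = last xs \<and> length ys < length xs"
proof (induction xs)
  case Nil then show ?case by (simp add: cnt_nil)
next
  case (Cons x ys)
  note pr = Cons.prems and IH = Cons.IH
  show ?case
  proof (cases ys)
    case Nil then show ?thesis using pr by (simp add: cnt_single)
  next
    case (Cons y zs)
    note Cons2 = this
    have e: "R_edge V E x y" and sy: "successively (R_edge V E) (y # zs)" using pr(1) Cons2 by auto
    show ?thesis
    proof (cases "uv_edge E u v x y")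
      case True
      then have yx: "y = cj \<sigma> x" using edge_uv[OF e] by simp
      have "cnt (uv_edge E u v) (y # zs) \<ge> 1" using pr(2) Cons2 True cnt_Cons2[of "uv_edge E u v" x y zs] by simp
      then obtain ws where ws: "successively (R_edge V E) (cj \<sigma> y # ws)" "last (cj \<sigma> y # ws) = last (y # zs)"
        "length ws + 1 = length zs" using shortL[OF sy] by blast
      have cy: "cj \<sigma> y = x" using yx cj_inv[of \<sigma> x] by simp
      show ?thesis using ws Cons2 cy by (intro exI[of _ "x # ws"]) auto
    next
      case False
      then have "cnt (uv_edge E u v) ys \<ge> 2" using pr(2) Cons2 cnt_Cons2[of "uv_edge E u v" x y zs] by simp
      then obtain ys' where ys': "ys' \<noteq> []" "successively (R_edge V E) ys'" "hd ys' = hd ys" "last ys' = last ys"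
        "length ys' < length ys" using IH sy Cons2 by blast
      have "successively (R_edge V E) (x # ys')" using ys' e Cons2 by (simp add: successively_Cons)
      then show ?thesis using ys' Cons2 by (intro exI[of _ "x # ys'"]) auto
    qed
  qed
qed

end



lemma sg_of: "simple_graph V E \<Longrightarrow> sg E" unfolding simple_graph_def sg_def by blast

lemma diff_iff:
  assumes gT: "gt E V T" and gT': "gt E V T'"
    and c1: "(u,v) \<in> (PR T)\<^sup>+ \<or> (v,u) \<in> (PR T)\<^sup>+" and c2: "(u,v) \<in> (PR T')\<^sup>+ \<or> (v,u) \<in> (PR T')\<^sup>+"
  shows "diff_order T T' u v \<longleftrightarrow> anc T u v \<noteq> anc T' u v"
proof -
  have n1: "\<not> ((u,v) \<in> (PR T)\<^sup>+ \<and> (v,u) \<in> (PR T)\<^sup>+)" using gt_acyc[OF gT] trancl_trans by metis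
  have n2: "\<not> ((u,v) \<in> (PR T')\<^sup>+ \<and> (v,u) \<in> (PR T')\<^sup>+)" using gt_acyc[OF gT'] trancl_trans by metis
  show ?thesis unfolding diff_order_def anc_PR using c1 c2 n1 n2 by blast
qed

lemma same_imp:
  assumes gT: "gt E V T" and gT': "gt E V T'" and s: "same_order T T' u v"
  shows "anc T u v = anc T' u v"
proof -
  have n1: "\<not> ((u,v) \<in> (PR T)\<^sup>+ \<and> (v,u) \<in> (PR T)\<^sup>+)" using gt_acyc[OF gT] trancl_trans by metis
  have n2: "\<not> ((u,v) \<in> (PR T')\<^sup>+ \<and> (v,u) \<in> (PR T')\<^sup>+)" using gt_acyc[OF gT'] trancl_trans by metis
  show ?thesis using s n1 n2 unfolding same_order_def anc_PR by blast
qed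

lemma nat_le1_odd: "(n::nat) \<le> 1 \<Longrightarrow> odd n \<Longrightarrow> n = 1" by presburger
lemma nat_le1_even: "(n::nat) \<le> 1 \<Longrightarrow> \<not> odd n \<Longrightarrow> n = 0" by presburger

theorem lemma4p1:
  fixes V :: "'a set" and E :: "'a \<Rightarrow> 'a \<Rightarrow> bool" and u v :: 'a
  assumes "simple_graph V E" and "connected_on E V" and "u \<in> V" and "v \<in> V"
  shows "(E u v \<longrightarrow> (\<forall>T T'. stree E V T \<and> stree E V T' \<longrightarrow>
            (diff_order T T' u v \<longleftrightarrow>
               (\<forall>ps. rot_seq V E T ps T' \<longrightarrow> odd (length (filter (is_pair u v) ps))))))
       \<and> (true_twins V E u v \<longrightarrow> (\<forall>T T'. stree E V T \<and> stree E V T' \<longrightarrow>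
            (\<forall>xs. min_R_path V E xs T T' \<longrightarrow>
               (diff_order T T' u v \<longrightarrow> num_uv_edges E u v xs = 1) \<and>
               (same_order T T' u v \<longrightarrow> num_uv_edges E u v xs = 0))))"
proof -
  have sg: "sg E" using sg_of[OF assms(1)] .
  have fin: "finite V" using assms(1) unfolding simple_graph_def by blast
  have EV: "\<And>x y. E x y \<Longrightarrow> x \<in> V \<and> y \<in> V" using assms(1) unfolding simple_graph_def by blast
  have A: "E u v \<longrightarrow> (\<forall>T T'. stree E V T \<and> stree E V T' \<longrightarrow>
            (diff_order T T' u v \<longleftrightarrow>
               (\<forall>ps. rot_seq V E T ps T' \<longrightarrow> odd (length (filter (is_pair u v) ps)))))"
  proof (intro impI allI)
    fix T T' assume Euv: "E u v" and st: "stree E V T \<and> stree E V T'"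
    have gT: "gt E V T" and gT': "gt E V T'" using st stree_gt[OF _ sg] by auto
    have d: "diff_order T T' u v \<longleftrightarrow> anc T u v \<noteq> anc T' u v"
      using diff_iff[OF gT gT' gt_edge[OF gT assms(3,4) Euv] gt_edge[OF gT' assms(3,4) Euv]] .
    have par: "rot_seq V E T ps T' \<Longrightarrow> (anc T u v \<noteq> anc T' u v) \<longleftrightarrow> odd (length (filter (is_pair u v) ps))" for ps
      using seq_parity[OF fin sg assms(3,4) Euv] by blast
    obtain ps0 where ps0: "rot_seq V E T ps0 T'" using connect[OF fin sg gT' gT] by blast
    show "diff_order T T' u v \<longleftrightarrow> (\<forall>ps. rot_seq V E T ps T' \<longrightarrow> odd (length (filter (is_pair u v) ps)))"
      using d par ps0 by blast
  qed
  have B: "true_twins V E u v \<longrightarrow> (\<forall>T T'. stree E V T \<and> stree E V T' \<longrightarrow>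
            (\<forall>xs. min_R_path V E xs T T' \<longrightarrow>
               (diff_order T T' u v \<longrightarrow> num_uv_edges E u v xs = 1) \<and>
               (same_order T T' u v \<longrightarrow> num_uv_edges E u v xs = 0)))"
  proof (intro impI allI)
    fix T T' xs assume tt: "true_twins V E u v" and st: "stree E V T \<and> stree E V T'"
      and mp: "min_R_path V E xs T T'"
    have gT: "gt E V T" and gT': "gt E V T'" using st stree_gt[OF _ sg] by auto
    show "(diff_order T T' u v \<longrightarrow> num_uv_edges E u v xs = 1) \<and>
          (same_order T T' u v \<longrightarrow> num_uv_edges E u v xs = 0)"
    proof (cases "u = v")
      case True
      have "\<not> anc T u u" "\<not> anc T' u u" using gt_acyc[OF gT] gt_acyc[OF gT'] unfolding anc_PR by auto
      then show ?thesis using True unfolding diff_order_def same_order_def by simp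
    next
      case False
      have Euv: "E u v"
      proof -
        have "v \<in> {x \<in> V. x = v \<or> E v x}" using assms(4) by simp
        then have "v \<in> {x \<in> V. x = u \<or> E u x}" using tt unfolding true_twins_def by simp
        then show ?thesis using False by simp
      qed
      have tw: "twins E u v"
        unfolding twins_def
      proof (intro conjI allI impI)
        fix x assume xu: "x \<noteq> u" and xv: "x \<noteq> v"
        show "E u x \<longleftrightarrow> E v x"
        proof
          assume "E u x"
          then have "x \<in> {x \<in> V. x = u \<or> E u x}" using EV by auto
          then have "x \<in> {x \<in> V. x = v \<or> E v x}" using tt unfolding true_twins_def by simp
          then show "E v x" using xv by simp
        next
          assume "E v x"
          then have "x \<in> {x \<in> V. x = v \<or> E v x}" using EV by auto
          then have "x \<in> {x \<in> V. x = u \<or> E u x}" using tt unfolding true_twins_def by simp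
          then show "E u x" using xu by simp
        qed
      qed (use False Euv in auto)
      interpret twin_ctx V E u v using fin sg tw assms(3,4) by unfold_locales
      have rp: "xs \<noteq> []" "hd xs = T" "last xs = T'" "stree E V T"
        "\<forall>i. Suc i < length xs \<longrightarrow> R_edge V E (xs ! i) (xs ! Suc i)"
        using mp unfolding min_R_path_def R_path_def by auto
      have succ: "successively (R_edge V E) xs" using rp(5) succ_nth by blast
      have numc: "num_uv_edges E u v xs = cnt (uv_edge E u v) xs"
        unfolding num_uv_edges_def cnt_def by simp
      have le1: "cnt (uv_edge E u v) xs \<le> 1"
      proof (rule ccontr)
        assume "\<not> cnt (uv_edge E u v) xs \<le> 1"
        then have "cnt (uv_edge E u v) xs \<ge> 2" by simp
        then obtain ys where ys: "ys \<noteq> []" "successively (R_edge V E) ys" "hd ys = hd xs"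
          "last ys = last xs" "length ys < length xs" using shortM[OF succ] by blast
        have "R_path V E ys T T'" unfolding R_path_def using ys rp succ_nth[of ys "R_edge V E"] by auto
        then have "length xs \<le> length ys" using mp unfolding min_R_path_def by blast
        then show False using ys(5) by simp
      qed
      have par: "(anc T u v \<noteq> anc T' u v) \<longleftrightarrow> odd (cnt (uv_edge E u v) xs)"
        using path_parity[OF fin sg assms(3,4) Euv rp(1) _ rp(5)] rp(2,3,4) by simp
      have d: "diff_order T T' u v \<longleftrightarrow> anc T u v \<noteq> anc T' u v"
        using diff_iff[OF gT gT' gt_edge[OF gT assms(3,4) Euv] gt_edge[OF gT' assms(3,4) Euv]] .
      show ?thesis
      proof (intro conjI impI)
        assume "diff_order T T' u v"
        then have "odd (cnt (uv_edge E u v) xs)" using d par by simp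
        then show "num_uv_edges E u v xs = 1" using nat_le1_odd[OF le1] numc by simp
      next
        assume "same_order T T' u v"
        then have "\<not> odd (cnt (uv_edge E u v) xs)" using same_imp[OF gT gT'] par by simp
        then show "num_uv_edges E u v xs = 0" using nat_le1_even[OF le1] numc by simp
      qed
    qed
  qed
  show ?thesis using A B by blast
qed


end
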